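(* Let $\alpha\in(0,1)$, $p>0$, and let $(X_k)_{k\ge1}$ be real numbers. For all integers $f\ge1$, $u\ge0$: $$S^{(1)}_2(f+u,f)=\sum_{v=0}^{u}S^{(1)}_3(f+u,f,v),\qquad S^{(2)}_2(f+u,f)=\sum_{v=0}^{u}S^{(2)}_3(f+u,f,v),$$ and for $0\le v\le u$, $$S^{(1)}_3(f+u,f,v)=\alpha\binom{f+v-1}{f-1}\,pX_{2f}\,S^{(2)}(u,v),\qquad S^{(2)}_3(f+u,f,v)=(1-\alpha)\binom{f+v-1}{f-1}\,pX_{2f}\,S^{(1)}(u,v).$$
   Context: A closed walk of length $k$ is a sequence $w=(w_1,\dots,w_k,w_{k+1})$ of positive integers with $w_{k+1}=w_1$; its skeleton $G_w$ is the simple undirected graph with vertex set $V_w=\{w_1,\dots,w_k\}$ and edge set $E_w=\{\{w_i,w_{i+1}\}: 1\le i\le k\}$, and for $e\in E_w$, $n_w(e)$ is the number of indices $i$ with $\{w_i,w_{i+1}\}=e$. A walk is minimal if $w_1=1$ and each vertex appearing for the first time receives the number equal to the number of distinct vertices already visited plus $1$. An essential walk is a minimal closed walk whose skeleton is a tree (its length is even, $2l$; the walk of length $0$, consisting of the single vertex $1$, is included). The root is $\rho=1$, and for walks of positive length $\nu=w_2=2$. For an essential walk $w$, let $\beta(w)$ be the number of vertices of $G_w$ at even graph distance from the root, and define $$\theta_1(w)=\alpha^{\beta(w)}(1-\alpha)^{|V_w|-\beta(w)}\prod_{e\in E_w}pX_{n_w(e)},\qquad \theta_2(w)=(1-\alpha)^{\beta(w)}\alpha^{|V_w|-\beta(w)}\prod_{e\in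 E_w}pX_{n_w(e)}.$$ Let $\Lambda(l,r)$ be the set of essential walks of length $2l$ having exactly $r$ steps starting at the root (i.e. $r=\#\{i\le 2l: w_i=1\}$), and $S^{(j)}(l,r)=\sum_{w\in\Lambda(l,r)}\theta_j(w)$ for $j=1,2$. Let $\Lambda_2(l,r)$ be the set of walks in $\Lambda(l,r)$ whose skeleton has exactly one edge incident to the root, and $S^{(j)}_2(l,r)=\sum_{w\in\Lambda_2(l,r)}\theta_j(w)$. For $w\in\Lambda_2(f+u,f)$ let $v$ be the number of steps of $w$ starting at vertex $2$ other than the steps $2\to1$; let $\Lambda_3(f+u,f,v)$ be the set of walks in $\Lambda_2(f+u,f)$ with this value of $v$, and $S^{(j)}_3(f+u,f,v)=\sum_{w\in\Lambda_3(f+u,f,v)}\theta_j(w)$. *)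

theory Defs
  imports Complex_Main
begin

text \<open>A walk w = (w_1,...,w_k,w_{k+1}) is represented by the list [w_1,...,w_{k+1}];
  its length is k = length w - 1.  Index i (1-based) corresponds to list position i-1.\<close>

definition walk_len :: "nat list \<Rightarrow> nat" where
  "walk_len w = length w - 1"

definition closed_walk :: "nat list \<Rightarrow> bool" where
  "closed_walk w \<longleftrightarrow> w \<noteq> [] \<and> (\<forall>x\<in>set w. 0 < x) \<and> last w = hd w"

definition minimal_walk :: "nat list \<Rightarrow> bool" where
  "minimal_walk w \<longleftrightarrow> w \<noteq> [] \<and> hd w = 1 \<and>
     (\<forall>i<length w. w ! i \<notin> set (take i w) \<longrightarrow> w ! i = card (set (take i w)) + 1)"

definition walk_vertices :: "nat list \<Rightarrow> nat set" where
  "walk_vertices w = set w"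

definition walk_edges :: "nat list \<Rightarrow> nat set set" where
  "walk_edges w = {{w ! i, w ! (i + 1)} | i. i < walk_len w}"

definition edge_mult :: "nat list \<Rightarrow> nat set \<Rightarrow> nat" where
  "edge_mult w e = card {i. i < walk_len w \<and> {w ! i, w ! (i + 1)} = e}"

definition adj :: "'a set set \<Rightarrow> ('a \<times> 'a) set" where
  "adj E = {(x, y). {x, y} \<in> E}"

definition simple_graph :: "'a set \<Rightarrow> 'a set set \<Rightarrow> bool" where
  "simple_graph V E \<longleftrightarrow> finite V \<and> (\<forall>e\<in>E. \<exists>x y. x \<noteq> y \<and> x \<in> V \<and> y \<in> V \<and> e = {x, y})"

definition connected_graph :: "'a set \<Rightarrow> 'a set set \<Rightarrow> bool" where
  "connected_graph V E \<longleftrightarrow> (\<forall>x\<in>V. \<forall>y\<in>V. (x, y) \<in> (adj E)\<^sup>*)"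

definition has_cycle :: "'a set set \<Rightarrow> bool" where
  "has_cycle E \<longleftrightarrow> (\<exists>c. distinct c \<and> 3 \<le> length c \<and>
      (\<forall>i<length c. {c ! i, c ! ((i + 1) mod length c)} \<in> E))"

definition is_tree :: "'a set \<Rightarrow> 'a set set \<Rightarrow> bool" where
  "is_tree V E \<longleftrightarrow> simple_graph V E \<and> connected_graph V E \<and> \<not> has_cycle E"

definition graph_dist :: "'a set set \<Rightarrow> 'a \<Rightarrow> 'a \<Rightarrow> nat" where
  "graph_dist E x y = (LEAST n. (x, y) \<in> (adj E) ^^ n)"

definition essential :: "nat list \<Rightarrow> bool" where
  "essential w \<longleftrightarrow> closed_walk w \<and> minimal_walk w \<and> is_tree (walk_vertices w) (walk_edges w)"

definition beta :: "nat list \<Rightarrow> nat" where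
  "beta w = card {x \<in> walk_vertices w. even (graph_dist (walk_edges w) 1 x)}"

definition theta1 :: "real \<Rightarrow> real \<Rightarrow> (nat \<Rightarrow> real) \<Rightarrow> nat list \<Rightarrow> real" where
  "theta1 \<alpha> p X w = \<alpha> ^ beta w * (1 - \<alpha>) ^ (card (walk_vertices w) - beta w) *
      (\<Prod>e\<in>walk_edges w. p * X (edge_mult w e))"

definition theta2 :: "real \<Rightarrow> real \<Rightarrow> (nat \<Rightarrow> real) \<Rightarrow> nat list \<Rightarrow> real" where
  "theta2 \<alpha> p X w = (1 - \<alpha>) ^ beta w * \<alpha> ^ (card (walk_vertices w) - beta w) *
      (\<Prod>e\<in>walk_edges w. p * X (edge_mult w e))"

definition root_steps :: "nat list \<Rightarrow> nat" where
  "root_steps w = card {i. i < walk_len w \<and> w ! i = 1}"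

definition Lam :: "nat \<Rightarrow> nat \<Rightarrow> nat list set" where
  "Lam l r = {w. essential w \<and> walk_len w = 2 * l \<and> root_steps w = r}"

definition Lam2 :: "nat \<Rightarrow> nat \<Rightarrow> nat list set" where
  "Lam2 l r = {w \<in> Lam l r. card {e \<in> walk_edges w. 1 \<in> e} = 1}"

definition vcount :: "nat list \<Rightarrow> nat" where
  "vcount w = card {i. i < walk_len w \<and> w ! i = 2 \<and> w ! (i + 1) \<noteq> 1}"

definition Lam3 :: "nat \<Rightarrow> nat \<Rightarrow> nat \<Rightarrow> nat list set" where
  "Lam3 l r v = {w \<in> Lam2 l r. vcount w = v}"

definition S :: "(nat list \<Rightarrow> real) \<Rightarrow> nat \<Rightarrow> nat \<Rightarrow> real" where
  "S \<theta> l r = (\<Sum>w\<in>Lam l r. \<theta> w)"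

definition S2 :: "(nat list \<Rightarrow> real) \<Rightarrow> nat \<Rightarrow> nat \<Rightarrow> real" where
  "S2 \<theta> l r = (\<Sum>w\<in>Lam2 l r. \<theta> w)"

definition S3 :: "(nat list \<Rightarrow> real) \<Rightarrow> nat \<Rightarrow> nat \<Rightarrow> nat \<Rightarrow> real" where
  "S3 \<theta> l r v = (\<Sum>w\<in>Lam3 l r v. \<theta> w)"

end

theory Submission
  imports Defs
begin


definition st :: "nat list \<Rightarrow> (nat \<times> nat) list" where
  "st w = zip w (tl w)"

lemma length_st: "length (st w) = walk_len w"
  by (simp add: st_def walk_len_def)

lemma nth_st: "i < walk_len w \<Longrightarrow> st w ! i = (w ! i, w ! Suc i)"
  by (simp add: st_def walk_len_def nth_tl)

lemma walk_edges_st: "walk_edges w = (\<lambda>(a,b). {a,b}) ` set (st w)"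
  unfolding walk_edges_def set_conv_nth
  apply (auto simp: length_st nth_st image_iff)
  by (metis nth_st)

lemma card_steps: "card {i. i < walk_len w \<and> P (w!i) (w!(i+1))} = length (filter (\<lambda>(a,b). P a b) (st w))"
  by (simp add: length_filter_conv_card length_st nth_st cong: conj_cong)

lemma edge_mult_st: "edge_mult w e = length (filter (\<lambda>(a,b). {a,b} = e) (st w))"
  unfolding edge_mult_def using card_steps[of w "\<lambda>a b. {a,b} = e"] by simp

lemma root_steps_st: "root_steps w = length (filter (\<lambda>(a,b). a = 1) (st w))"
  unfolding root_steps_def using card_steps[of w "\<lambda>a b. a = 1"] by simp

lemma vcount_st: "vcount w = length (filter (\<lambda>(a,b). a = 2 \<and> b \<noteq> 1) (st w))"
  unfolding vcount_def using card_steps[of w "\<lambda>a b. a = 2 \<and> b \<noteq> 1"] by simp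

lemma st_Nil[simp]: "st [] = []" and st_single[simp]: "st [x] = []"
  by (auto simp: st_def)

lemma st_Cons2[simp]: "st (x # y # xs) = (x, y) # st (y # xs)"
  by (simp add: st_def)

lemma st_append: "st (xs @ y # ys) = st (xs @ [y]) @ st (y # ys)"
  by (induction xs rule: induct_list012) auto

lemma st_snoc: "xs \<noteq> [] \<Longrightarrow> st (xs @ [y]) = st xs @ [(last xs, y)]"
  by (induction xs rule: induct_list012) auto



lemma walk_edges_Nil[simp]: "walk_edges [] = {}" and walk_edges_single[simp]: "walk_edges [x] = {}"
  by (simp_all add: walk_edges_st)

lemma walk_edges_snoc: "w \<noteq> [] \<Longrightarrow> walk_edges (w @ [x]) = insert {last w, x} (walk_edges w)"
  by (simp add: walk_edges_st st_snoc)

lemma walk_edges_Cons2[simp]: "walk_edges (x # y # xs) = insert {x, y} (walk_edges (y # xs))"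
  by (simp add: walk_edges_st)

lemma walk_edges_sub: "e \<in> walk_edges w \<Longrightarrow> e \<subseteq> set w"
proof -
  have "set (tl w) \<subseteq> set w" by (cases w) auto
  then show "e \<in> walk_edges w \<Longrightarrow> e \<subseteq> set w"
  unfolding walk_edges_st st_def by (auto dest: set_zip_leftD set_zip_rightD)
qed

lemma finite_walk_edges[simp]: "finite (walk_edges w)"
  by (simp add: walk_edges_st)

lemma adj_mono: "E \<subseteq> F \<Longrightarrow> adj E \<subseteq> adj F"
  by (auto simp: adj_def)

lemma adj_sym: "(a, b) \<in> adj E \<Longrightarrow> (b, a) \<in> adj E"
  by (auto simp: adj_def insert_commute)

lemma rtrancl_adj_sym: "(a, b) \<in> (adj E)\<^sup>* \<Longrightarrow> (b, a) \<in> (adj E)\<^sup>*"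
proof (induction rule: rtrancl_induct)
  case base then show ?case by simp
next
  case (step y z) then show ?case
    by (meson adj_sym converse_rtrancl_into_rtrancl)
qed

lemma walk_conn_hd: "w \<noteq> [] \<Longrightarrow> a \<in> set w \<Longrightarrow> (hd w, a) \<in> (adj (walk_edges w))\<^sup>*"
proof (induction w arbitrary: a rule: rev_induct)
  case Nil then show ?case by simp
next
  case (snoc x w)
  show ?case
  proof (cases "w = []")
    case True then show ?thesis using snoc by simp
  next
    case False
    have sub: "adj (walk_edges w) \<subseteq> adj (walk_edges (w @ [x]))"
      using False by (intro adj_mono) (auto simp: walk_edges_snoc)
    have "(hd w, last w) \<in> (adj (walk_edges w))\<^sup>*" using snoc.IH False by simp
    hence 1: "(hd w, last w) \<in> (adj (walk_edges (w @ [x])))\<^sup>*" using rtrancl_mono[OF sub] by blast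
    have 2: "(last w, x) \<in> adj (walk_edges (w @ [x]))" using False by (simp add: walk_edges_snoc adj_def)
    show ?thesis
    proof (cases "a = x")
      case True then show ?thesis using 1 2 False by simp
    next
      case ne: False
      then have "a \<in> set w" using snoc by simp
      then have "(hd w, a) \<in> (adj (walk_edges w))\<^sup>*" using snoc.IH False by simp
      then show ?thesis using rtrancl_mono[OF sub] False by auto
    qed
  qed
qed

lemma walk_connected: "w \<noteq> [] \<Longrightarrow> connected_graph (set w) (walk_edges w)"
  unfolding connected_graph_def
  by (meson rtrancl_adj_sym rtrancl_trans walk_conn_hd)

inductive tw :: "nat list \<Rightarrow> bool" where
  tw_Nil: "tw []"
| tw_single: "tw [x]"
| tw_snoc: "tw w \<Longrightarrow> w \<noteq> [] \<Longrightarrow> last w \<noteq> x \<Longrightarrow> (x \<in> set w \<Longrightarrow> {last w, x} \<in> walk_edges w) \<Longrightarrow> tw (w @ [x])"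

lemma tw_snoc_iff: "w \<noteq> [] \<Longrightarrow> tw (w @ [x]) \<longleftrightarrow> tw w \<and> last w \<noteq> x \<and> (x \<in> set w \<longrightarrow> {last w, x} \<in> walk_edges w)"
proof
  assume a: "w \<noteq> []" "tw (w @ [x])"
  from a(2) show "tw w \<and> last w \<noteq> x \<and> (x \<in> set w \<longrightarrow> {last w, x} \<in> walk_edges w)"
    using a(1) by (cases rule: tw.cases) auto
next
  assume "w \<noteq> []" "tw w \<and> last w \<noteq> x \<and> (x \<in> set w \<longrightarrow> {last w, x} \<in> walk_edges w)"
  then show "tw (w @ [x])" by (auto intro: tw_snoc)
qed

definition loopfree :: "nat set set \<Rightarrow> bool" where
  "loopfree E \<longleftrightarrow> (\<forall>e\<in>E. card e = 2)"

lemma card_le_edges: "w \<noteq> [] \<Longrightarrow> card (set w) \<le> card (walk_edges w) + 1"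
proof (induction w rule: rev_induct)
  case Nil then show ?case by simp
next
  case (snoc x w)
  show ?case
  proof (cases "w = []")
    case True then show ?thesis by simp
  next
    case False
    show ?thesis
    proof (cases "x \<in> set w")
      case True
      then have "set (w @ [x]) = set w" by auto
      moreover have "card (walk_edges w) \<le> card (walk_edges (w @ [x]))"
        using False by (simp add: walk_edges_snoc card_insert_le)
      ultimately show ?thesis using snoc False by simp
    next
      case nx: False
      then have "{last w, x} \<notin> walk_edges w" using walk_edges_sub by blast
      then show ?thesis using snoc False nx by (simp add: walk_edges_snoc)
    qed
  qed
qed

lemma tw_count: "tw w \<Longrightarrow> w \<noteq> [] \<Longrightarrow> loopfree (walk_edges w) \<and> card (walk_edges w) + 1 = card (set w)"
proof (induction w rule: rev_induct)
  case Nil then show ?case by simp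
next
  case (snoc x w)
  show ?case
  proof (cases "w = []")
    case True then show ?thesis by (simp add: loopfree_def)
  next
    case False
    with snoc.prems have t: "tw w" "last w \<noteq> x" "x \<in> set w \<longrightarrow> {last w, x} \<in> walk_edges w"
      by (auto simp: tw_snoc_iff)
    with snoc.IH False have ih: "loopfree (walk_edges w)" "card (walk_edges w) + 1 = card (set w)" by auto
    have lf: "loopfree (walk_edges (w @ [x]))" using ih(1) t(2) False
      by (simp add: walk_edges_snoc loopfree_def)
    show ?thesis
    proof (cases "x \<in> set w")
      case True
      then show ?thesis using t ih lf False by (simp add: walk_edges_snoc insert_absorb)
    next
      case nx: False
      then have "{last w, x} \<notin> walk_edges w" using walk_edges_sub by blast
      then show ?thesis using ih lf False nx by (simp add: walk_edges_snoc)
    qed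
  qed
qed

lemma count_tw: "w \<noteq> [] \<Longrightarrow> loopfree (walk_edges w) \<Longrightarrow> card (walk_edges w) + 1 = card (set w) \<Longrightarrow> tw w"
proof (induction w rule: rev_induct)
  case Nil then show ?case by simp
next
  case (snoc x w)
  show ?case
  proof (cases "w = []")
    case True then show ?thesis by (simp add: tw_single)
  next
    case False
    have lfw: "loopfree (walk_edges w)" using snoc.prems False by (simp add: walk_edges_snoc loopfree_def)
    have ne: "last w \<noteq> x" using snoc.prems(2) False by (auto simp: walk_edges_snoc loopfree_def)
    have le: "card (set w) \<le> card (walk_edges w) + 1" using card_le_edges False by simp
    show ?thesis
    proof (cases "x \<in> set w")
      case True
      then have sw: "set (w @ [x]) = set w" by auto
      have "card (walk_edges (w @ [x])) \<le> card (walk_edges w)"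
        using snoc.prems(3) sw le by simp
      then have "{last w, x} \<in> walk_edges w"
        using False by (simp add: walk_edges_snoc card_insert_if split: if_splits)
      then have "walk_edges (w @ [x]) = walk_edges w" using False by (simp add: walk_edges_snoc insert_absorb)
      then have "tw w" using snoc.IH False lfw snoc.prems(3) sw by simp
      then show ?thesis using ne \<open>{last w, x} \<in> walk_edges w\<close> False by (simp add: tw_snoc_iff)
    next
      case nx: False
      then have "{last w, x} \<notin> walk_edges w" using walk_edges_sub by blast
      then have "card (walk_edges w) + 1 = card (set w)" using snoc.prems(3) False nx
        by (simp add: walk_edges_snoc)
      then have "tw w" using snoc.IH False lfw by simp
      then show ?thesis using ne nx False by (simp add: tw_snoc_iff)
    qed
  qed
qed

lemma tw_coloring: "tw w \<Longrightarrow> \<exists>col. \<forall>a b. {a, b} \<in> walk_edges w \<longrightarrow> col a \<noteq> (col b :: bool)"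
proof (induction rule: tw.induct)
  case tw_Nil then show ?case by simp
next
  case (tw_single x) then show ?case by simp
next
  case (tw_snoc w x)
  then obtain col :: "nat \<Rightarrow> bool" where col: "\<forall>a b. {a, b} \<in> walk_edges w \<longrightarrow> col a \<noteq> col b" by blast
  show ?case
  proof (cases "x \<in> set w")
    case True
    then show ?thesis using tw_snoc col by (auto simp: walk_edges_snoc insert_absorb)
  next
    case False
    define col' where "col' = col(x := \<not> col (last w))"
    have "\<forall>a b. {a, b} \<in> walk_edges (w @ [x]) \<longrightarrow> col' a \<noteq> col' b"
    proof (intro allI impI)
      fix a b assume ab: "{a, b} \<in> walk_edges (w @ [x])"
      show "col' a \<noteq> col' b"
      proof (cases "{a, b} = {last w, x}")
        case True
        then have "(a = last w \<and> b = x) \<or> (a = x \<and> b = last w)" by (auto simp: doubleton_eq_iff)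
        then show ?thesis using tw_snoc.hyps(3) by (auto simp: col'_def)
      next
        case f: False
        then have "{a, b} \<in> walk_edges w" using ab tw_snoc by (simp add: walk_edges_snoc)
        then have "a \<in> set w" "b \<in> set w" using walk_edges_sub by blast+
        then show ?thesis using col \<open>{a, b} \<in> walk_edges w\<close> False by (auto simp: col'_def)
      qed
    qed
    then show ?thesis by blast
  qed
qed



lemma walk_edges_form: "e \<in> walk_edges w \<Longrightarrow> \<exists>a b. e = {a, b}"
  unfolding walk_edges_st by auto

lemma simple_iff_loopfree: "simple_graph (set w) (walk_edges w) \<longleftrightarrow> loopfree (walk_edges w)"
  unfolding simple_graph_def loopfree_def
proof (intro iffI conjI ballI)
  fix e assume "finite (set w) \<and> (\<forall>e\<in>walk_edges w. \<exists>x y. x \<noteq> y \<and> x \<in> set w \<and> y \<in> set w \<and> e = {x, y})" "e \<in> walk_edges w"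
  then show "card e = 2" by auto
next
  show "finite (set w)" by simp
next
  fix e assume a: "\<forall>e\<in>walk_edges w. card e = 2" "e \<in> walk_edges w"
  then obtain x y where e: "e = {x, y}" using walk_edges_form by blast
  then have "x \<noteq> y" using a by (cases "x = y") auto
  then show "\<exists>x y. x \<noteq> y \<and> x \<in> set w \<and> y \<in> set w \<and> e = {x, y}"
    using e a(2) walk_edges_sub by blast
qed

lemma distinct_path:
  assumes "(a, b) \<in> R\<^sup>*"
  shows "\<exists>p. p \<noteq> [] \<and> hd p = a \<and> last p = b \<and> distinct p \<and> successively (\<lambda>x y. (x, y) \<in> R) p"
  using assms
proof (induction rule: rtrancl_induct)
  case base
  then show ?case by (intro exI[of _ "[a]"]) simp
next
  case (step y z)
  then obtain p where p: "p \<noteq> []" "hd p = a" "last p = y" "distinct p" "successively (\<lambda>x y. (x, y) \<in> R) p"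
    by blast
  show ?case
  proof (cases "z \<in> set p")
    case True
    then obtain p1 p2 where pp: "p = p1 @ z # p2" by (meson split_list)
    have "successively (\<lambda>x y. (x, y) \<in> R) (p1 @ [z])"
      using p(5) unfolding pp
      by (metis append.assoc append_Cons append_Nil successively_append_iff)
    moreover have "hd (p1 @ [z]) = a" using p(2) pp by (cases p1) auto
    moreover have "distinct (p1 @ [z])" using p(4) pp by auto
    ultimately show ?thesis by (intro exI[of _ "p1 @ [z]"]) simp
  next
    case False
    have "successively (\<lambda>x y. (x, y) \<in> R) (p @ [z])"
      using p step by (simp add: successively_append_iff)
    moreover have "hd (p @ [z]) = a" using p by simp
    ultimately show ?thesis using p False by (intro exI[of _ "p @ [z]"]) simp
  qed
qed

lemma mod_succ: "(k::nat) < L \<Longrightarrow> (k + 1) mod L = (if k + 1 < L then k + 1 else 0)"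
proof (cases "k + 1 < L")
  case True then show ?thesis by simp
next
  case False
  assume "k < L"
  then have "k + 1 = L" using False by simp
  then show ?thesis by simp
qed

lemma mod_pred: "(k::nat) < L \<Longrightarrow> (k + L - 1) mod L = (if k = 0 then L - 1 else k - 1)"
proof -
  assume k: "k < L"
  show ?thesis
  proof (cases "k = 0")
    case True then show ?thesis using k by (simp add: mod_less)
  next
    case False
    then have "k + L - 1 = (k - 1) + L" by simp
    then have "(k + L - 1) mod L = (k - 1) mod L" by simp
    then show ?thesis using k False by simp
  qed
qed

lemma mod_pred_succ: "(k::nat) < L \<Longrightarrow> ((k + L - 1) mod L + 1) mod L = k"
proof -
  assume k: "k < L"
  show ?thesis
  proof (cases "k = 0")
    case True then show ?thesis using k by (simp add: mod_pred mod_succ)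
  next
    case False
    then have "(k + L - 1) mod L = k - 1" using mod_pred[OF k] by simp
    then show ?thesis using False k mod_succ[of "k-1" L] by simp
  qed
qed

lemma mod_succ': "(k::nat) < L \<Longrightarrow> Suc k mod L = (if Suc k < L then Suc k else 0)"
  using mod_succ by simp
lemma mod_pred': "(k::nat) < L \<Longrightarrow> (k + L - Suc 0) mod L = (if k = 0 then L - 1 else k - 1)"
  using mod_pred by simp

lemma no_cycle_empty: "\<not> has_cycle ({} :: nat set set)"
proof
  assume "has_cycle ({} :: nat set set)"
  then obtain c :: "nat list" where "3 \<le> length c" "\<forall>i<length c. {c ! i, c ! ((i + 1) mod length c)} \<in> {}"
    unfolding has_cycle_def by blast
  moreover have "0 < length c" using calculation(1) by linarith
  ultimately show False by blast
qed

lemma tw_acyclic: "tw w \<Longrightarrow> \<not> has_cycle (walk_edges w)"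
proof (induction rule: tw.induct)
  case tw_Nil then show ?case using no_cycle_empty by simp
next
  case (tw_single x) then show ?case using no_cycle_empty by simp
next
  case (tw_snoc w x)
  show ?case
  proof (cases "x \<in> set w")
    case True
    then show ?thesis using tw_snoc by (simp add: walk_edges_snoc insert_absorb)
  next
    case nx: False
    let ?E = "walk_edges (w @ [x])"
    have E: "?E = insert {last w, x} (walk_edges w)" using tw_snoc by (simp add: walk_edges_snoc)
    show ?thesis
    proof
      assume "has_cycle ?E"
      then obtain c where c: "distinct c" "3 \<le> length c" "\<forall>i<length c. {c ! i, c ! ((i + 1) mod length c)} \<in> ?E"
        unfolding has_cycle_def by blast
      let ?L = "length c"
      show False
      proof (cases "x \<in> set c")
        case True
        then obtain k where k: "k < ?L" "c ! k = x" by (meson in_set_conv_nth)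
        define k1 where "k1 = (k + 1) mod ?L"
        define k0 where "k0 = (k + ?L - 1) mod ?L"
        have k1L: "k1 < ?L" and k0L: "k0 < ?L"
        proof -
          have "0 < ?L" using k(1) by linarith
          then show "k1 < ?L" "k0 < ?L" unfolding k1_def k0_def by simp_all
        qed
        have "k1 \<noteq> k" using k c(2) by (auto simp: k1_def mod_succ')
        have "k0 \<noteq> k" using k c(2) by (auto simp: k0_def mod_pred')
        have "k1 \<noteq> k0" using k c(2) by (auto simp: k1_def k0_def mod_pred' mod_succ' split: if_splits)
        have e1: "{x, c ! k1} \<in> ?E" using c(3) k unfolding k1_def by auto
        have "(k0 + 1) mod ?L = k" using mod_pred_succ[OF k(1)] unfolding k0_def by simp
        then have e0: "{c ! k0, x} \<in> ?E" using c(3) k0L k by metis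
        have "x \<notin> e" if "e \<in> walk_edges w" for e using walk_edges_sub[OF that] nx by blast
        then have "{x, c ! k1} = {last w, x}" "{c ! k0, x} = {last w, x}" using e1 e0 E by auto
        moreover have "c ! k1 \<noteq> x" "c ! k0 \<noteq> x" using c(1) k k1L k0L \<open>k1 \<noteq> k\<close> \<open>k0 \<noteq> k\<close>
          by (metis nth_eq_iff_index_eq)+
        ultimately have "c ! k1 = c ! k0" by (auto simp: doubleton_eq_iff)
        then show False using c(1) k1L k0L \<open>k1 \<noteq> k0\<close> by (metis nth_eq_iff_index_eq)
      next
        case False
        have "\<forall>i<?L. {c ! i, c ! ((i + 1) mod ?L)} \<in> walk_edges w"
        proof (intro allI impI)
          fix i assume i: "i < ?L"
          have "0 < ?L" using i by linarith
          then have "(i + 1) mod ?L < ?L" by simp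
          then have "c ! i \<noteq> x" "c ! ((i + 1) mod ?L) \<noteq> x" using False i nth_mem by metis+
          then have "{c ! i, c ! ((i + 1) mod ?L)} \<noteq> {last w, x}" by (auto simp: doubleton_eq_iff)
          then show "{c ! i, c ! ((i + 1) mod ?L)} \<in> walk_edges w" using c(3) i E by auto
        qed
        then have "has_cycle (walk_edges w)" using c unfolding has_cycle_def by blast
        then show False using tw_snoc.IH by simp
      qed
    qed
  qed
qed

lemma has_cycle_mono: "has_cycle E \<Longrightarrow> E \<subseteq> F \<Longrightarrow> has_cycle F"
  unfolding has_cycle_def by blast

lemma tree_tw: "w \<noteq> [] \<Longrightarrow> is_tree (set w) (walk_edges w) \<Longrightarrow> tw w"
proof (induction w rule: rev_induct)
  case Nil then show ?case by simp
next
  case (snoc x w)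
  show ?case
  proof (cases "w = []")
    case True then show ?thesis by (simp add: tw_single)
  next
    case False
    have E: "walk_edges (w @ [x]) = insert {last w, x} (walk_edges w)" using False by (simp add: walk_edges_snoc)
    have lf: "loopfree (walk_edges (w @ [x]))" "\<not> has_cycle (walk_edges (w @ [x]))"
      using snoc.prems unfolding is_tree_def simple_iff_loopfree[symmetric] by blast+
    have lfw: "loopfree (walk_edges w)" using lf(1) E unfolding loopfree_def by blast
    have acw: "\<not> has_cycle (walk_edges w)" using lf(2) E has_cycle_mono[of "walk_edges w" "walk_edges (w @ [x])"] by blast
    have "is_tree (set w) (walk_edges w)" unfolding is_tree_def simple_iff_loopfree
      using lfw acw walk_connected[OF False] by blast
    then have "tw w" using snoc.IH False by blast
    have ne: "last w \<noteq> x"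
    proof
      assume "last w = x"
      then have "{x} \<in> walk_edges (w @ [x])" using E by simp
      then show False using lf(1) unfolding loopfree_def by fastforce
    qed
    have "{last w, x} \<in> walk_edges w" if xin: "x \<in> set w"
    proof (rule ccontr)
      assume nE: "{last w, x} \<notin> walk_edges w"
      have "(x, last w) \<in> (adj (walk_edges w))\<^sup>*"
        using walk_connected[OF False] xin False last_in_set[OF False] unfolding connected_graph_def by blast
      then obtain p where p: "p \<noteq> []" "hd p = x" "last p = last w" "distinct p"
        "successively (\<lambda>a b. (a, b) \<in> adj (walk_edges w)) p"
        using distinct_path[of x "last w" "adj (walk_edges w)"] by blast
      have l1: "length p \<noteq> 1"
      proof
        assume "length p = 1"
        then obtain a where "p = [a]" by (auto simp: length_Suc_conv)
        then show False using p(2,3) ne by simp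
      qed
      have l2: "length p \<noteq> 2"
      proof
        assume "length p = 2"
        then obtain a b where ab: "p = [a, b]" by (auto simp: numeral_2_eq_2 length_Suc_conv)
        then have "{a, b} \<in> walk_edges w" using p(5) by (simp add: adj_def)
        moreover have "a = x" "b = last w" using ab p(2,3) by simp_all
        moreover have "{x, last w} = {last w, x}" by blast
        ultimately show False using nE by simp
      qed
      have L3: "3 \<le> length p" using l1 l2 p(1) by (cases "length p") auto
      have "\<forall>i<length p. {p ! i, p ! ((i + 1) mod length p)} \<in> walk_edges (w @ [x])"
      proof (intro allI impI)
        fix i assume i: "i < length p"
        show "{p ! i, p ! ((i + 1) mod length p)} \<in> walk_edges (w @ [x])"
        proof (cases "i + 1 < length p")
          case True
          then have "(p ! i, p ! Suc i) \<in> adj (walk_edges w)" using successively_nth[OF p(5)] by simp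
          then show ?thesis using True E by (auto simp: adj_def)
        next
          case f: False
          then have "i = length p - 1" using i by simp
          then have "p ! i = last w" "(i + 1) mod length p = 0"
            using p(1) p(3) i by (auto simp: last_conv_nth)
          moreover have "p ! 0 = x" using p(1) p(2) by (simp add: hd_conv_nth)
          ultimately show ?thesis using E by simp
        qed
      qed
      then have "has_cycle (walk_edges (w @ [x]))" using p(4) L3 unfolding has_cycle_def by blast
      then show False using lf(2) by simp
    qed
    then show ?thesis using \<open>tw w\<close> ne False by (simp add: tw_snoc_iff)
  qed
qed

lemma tree_iff_tw: "w \<noteq> [] \<Longrightarrow> is_tree (set w) (walk_edges w) \<longleftrightarrow> tw w"
proof
  assume "w \<noteq> []" "is_tree (set w) (walk_edges w)" then show "tw w" by (rule tree_tw)
next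
  assume a: "w \<noteq> []" "tw w"
  then show "is_tree (set w) (walk_edges w)"
    using tw_count[OF a(2,1)] tw_acyclic[OF a(2)] walk_connected[OF a(1)] unfolding is_tree_def simple_iff_loopfree by blast
qed

lemma tree_iff_count: "w \<noteq> [] \<Longrightarrow> is_tree (set w) (walk_edges w) \<longleftrightarrow>
   loopfree (walk_edges w) \<and> card (walk_edges w) + 1 = card (set w)"
  using tree_iff_tw tw_count count_tw by blast



definition proper :: "(nat \<Rightarrow> bool) \<Rightarrow> nat set set \<Rightarrow> bool" where
  "proper col E \<longleftrightarrow> (\<forall>a b. {a, b} \<in> E \<longrightarrow> col a \<noteq> col b)"

lemma proper_relpow: "proper col E \<Longrightarrow> (a, b) \<in> adj E ^^ n \<Longrightarrow> (col a = col b \<longleftrightarrow> even n)"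
proof (induction n arbitrary: b)
  case 0 then show ?case by simp
next
  case (Suc n)
  then obtain c where c: "(a, c) \<in> adj E ^^ n" "(c, b) \<in> adj E" by (meson relpow_Suc_E)
  then have "col c \<noteq> col b" using Suc.prems(1) by (auto simp: proper_def adj_def)
  then show ?case using Suc.IH[OF Suc.prems(1) c(1)] by auto
qed

lemma even_dist: "proper col E \<Longrightarrow> (a, b) \<in> (adj E)\<^sup>* \<Longrightarrow> (even (graph_dist E a b) \<longleftrightarrow> col a = col b)"
proof -
  assume p: "proper col E" and r: "(a, b) \<in> (adj E)\<^sup>*"
  then obtain n where "(a, b) \<in> adj E ^^ n" using rtrancl_power by blast
  then have "(a, b) \<in> adj E ^^ graph_dist E a b" unfolding graph_dist_def by (rule LeastI)
  then show ?thesis using proper_relpow[OF p] by simp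
qed

lemma beta_col: "w \<noteq> [] \<Longrightarrow> 1 \<in> set w \<Longrightarrow> proper col (walk_edges w) \<Longrightarrow>
   beta w = card {x \<in> set w. col x = col 1}"
proof -
  assume a: "w \<noteq> []" "1 \<in> set w" "proper col (walk_edges w)"
  have "{x \<in> set w. even (graph_dist (walk_edges w) 1 x)} = {x \<in> set w. col x = col 1}"
  proof (intro Collect_cong conj_cong refl)
    fix x assume "x \<in> set w"
    then have "(1, x) \<in> (adj (walk_edges w))\<^sup>*" using walk_connected[OF a(1)] a(2)
      unfolding connected_graph_def by blast
    then show "even (graph_dist (walk_edges w) 1 x) = (col x = col 1)" using even_dist[OF a(3)] by auto
  qed
  then show ?thesis unfolding beta_def walk_vertices_def by simp
qed

lemma tree_coloring: "w \<noteq> [] \<Longrightarrow> is_tree (set w) (walk_edges w) \<Longrightarrow> \<exists>col. proper col (walk_edges w)"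
  using tree_tw tw_coloring unfolding proper_def by blast



definition R :: "nat \<Rightarrow> nat list" where
  "R c = concat (replicate c [2, 1]) @ [2]"

fun ex :: "nat list \<Rightarrow> nat list \<Rightarrow> nat list" where
  "ex cs [] = []"
| "ex cs (x # xs) = (if x = 1 then R (hd cs) @ ex (tl cs) xs else Suc x # ex cs xs)"

definition Psi :: "nat list \<Rightarrow> nat list \<Rightarrow> nat list" where
  "Psi cs W = 1 # ex cs W @ [1]"

lemma R_0[simp]: "R 0 = [2]" and R_Suc: "R (Suc c) = 2 # 1 # R c"
  by (simp_all add: R_def)

lemma R_ne[simp]: "R c \<noteq> []" by (simp add: R_def)
lemma hd_R[simp]: "hd (R c) = 2" by (cases c) (simp_all add: R_Suc)
lemma last_R[simp]: "last (R c) = 2" by (simp add: R_def)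
lemma set_R: "set (R c) \<subseteq> {1, 2}" by (auto simp: R_def)
lemma length_R[simp]: "length (R c) = 2 * c + 1" by (induction c) (simp_all add: R_Suc)

lemma two_in_R: "2 \<in> set (R c)"
  using hd_in_set[OF R_ne[of c]] by simp

lemma ins_set_R: "insert 1 (set (R c)) = {1, 2}"
  using set_R[of c] two_in_R[of c] by auto

lemma st_R: "st (R c) = concat (replicate c [(2, 1), (1, 2)])"
proof (induction c)
  case 0 then show ?case by simp
next
  case (Suc c)
  have "R c = 2 # tl (R c)" using hd_R[of c] R_ne[of c] by (metis list.collapse)
  then have "st (2 # 1 # R c) = (2, 1) # (1, 2) # st (R c)" by (metis st_Cons2)
  then show ?case using Suc by (simp add: R_Suc)
qed

lemma ex_ne: "W \<noteq> [] \<Longrightarrow> ex cs W \<noteq> []"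
  by (cases W) auto

lemma hd_ex: "W \<noteq> [] \<Longrightarrow> hd (ex cs W) = Suc (hd W)"
  by (cases W) auto

lemma last_ex: "W \<noteq> [] \<Longrightarrow> last (ex cs W) = Suc (last W)"
proof (induction W arbitrary: cs)
  case Nil then show ?case by simp
next
  case (Cons x xs)
  show ?case
  proof (cases "xs = []")
    case True then show ?thesis by simp
  next
    case False
    then show ?thesis using Cons.IH ex_ne[OF False] by auto
  qed
qed

lemma length_ex: "length cs = count_list W 1 \<Longrightarrow> length (ex cs W) = length W + 2 * sum_list cs"
proof (induction W arbitrary: cs)
  case Nil then show ?case by simp
next
  case (Cons x xs)
  show ?case
  proof (cases "x = 1")
    case True
    then obtain c cs' where cs: "cs = c # cs'" using Cons.prems by (cases cs) auto
    then show ?thesis using Cons True by simp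
  next
    case False then show ?thesis using Cons by simp
  qed
qed

lemma set_ex: "insert 1 (set (ex cs W)) = insert 1 (Suc ` set W)"
proof (induction W arbitrary: cs)
  case Nil then show ?case by simp
next
  case (Cons x xs)
  show ?case
  proof (cases "x = 1")
    case True
    have a: "insert 1 (set (R (hd cs))) = {1, 2}" by (rule ins_set_R)
    have e: "ex cs (x # xs) = R (hd cs) @ ex (tl cs) xs" using True by simp
    have "insert 1 (set (ex cs (x # xs))) = insert 1 (set (R (hd cs))) \<union> insert 1 (set (ex (tl cs) xs))"
      unfolding e set_append by blast
    also have "\<dots> = {1, 2} \<union> insert 1 (Suc ` set xs)" unfolding a Cons.IH[of "tl cs"] ..
    also have "\<dots> = insert 1 (Suc ` set (x # xs))" using True by auto
    finally show ?thesis .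
  next
    case False
    have e: "ex cs (x # xs) = Suc x # ex cs xs" using False by simp
    have "insert 1 (set (ex cs (x # xs))) = insert (Suc x) (insert 1 (set (ex cs xs)))"
      unfolding e by auto
    also have "\<dots> = insert (Suc x) (insert 1 (Suc ` set xs))" unfolding Cons.IH[of cs] ..
    also have "\<dots> = insert 1 (Suc ` set (x # xs))" by auto
    finally show ?thesis .
  qed
qed

lemma ex_append: "ex cs (xs @ ys) = ex cs xs @ ex (drop (count_list xs 1) cs) ys"
  by (induction xs arbitrary: cs) (auto simp: drop_Suc)

lemma cnt_rep: "length (filter P (concat (replicate c [s1, s2]))) = c * (length (filter P [s1, s2]))"
  by (induction c) auto

definition S2m :: "nat \<times> nat \<Rightarrow> nat \<times> nat" where "S2m = (\<lambda>(a, b). (Suc a, Suc b))"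

lemma count_st_ex:
  assumes "length cs = count_list W 1" "W \<noteq> []"
  shows "length (filter P (st (ex cs W))) =
         length (filter (P \<circ> S2m) (st W)) + sum_list cs * length (filter P [(2, 1), (1, 2)])"
  using assms
proof (induction W arbitrary: cs)
  case Nil then show ?case by simp
next
  case (Cons x xs)
  show ?case
  proof (cases "xs = []")
    case True
    show ?thesis
    proof (cases "x = 1")
      case x1: True
      then obtain c where "cs = [c]" using Cons.prems True by (cases cs) auto
      then show ?thesis using x1 True by (simp add: st_R cnt_rep)
    next
      case False then show ?thesis using Cons.prems True by simp
    qed
  next
    case False
    obtain y ys where xs: "xs = y # ys" using False by (cases xs) auto
    define cs' where "cs' = (if x = 1 then tl cs else cs)"
    define B where "B = (if x = 1 then R (hd cs) else [Suc x])"
    have exW: "ex cs (x # xs) = B @ ex cs' xs" by (simp add: B_def cs'_def)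
    have lcs': "length cs' = count_list xs 1" using Cons.prems(1) by (auto simp: cs'_def)
    have sl: "sum_list cs = (if x = 1 then hd cs else 0) + sum_list cs'"
      using Cons.prems(1) by (cases cs) (auto simp: cs'_def)
    have ne: "ex cs' xs \<noteq> []" using ex_ne False by simp
    have hde: "hd (ex cs' xs) = Suc y" using hd_ex False xs by simp
    have "ex cs' xs = Suc y # tl (ex cs' xs)" using ne hde by (metis list.collapse)
    then have "st (B @ ex cs' xs) = st (B @ [Suc y]) @ st (ex cs' xs)"
      by (metis st_append)
    also have "st (B @ [Suc y]) = st B @ [(Suc x, Suc y)]"
      by (simp add: st_snoc B_def)
    finally have stE: "st (ex cs (x # xs)) = st B @ [(Suc x, Suc y)] @ st (ex cs' xs)" using exW by simp
    have stW: "st (x # xs) = (x, y) # st xs" using xs by simp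
    have stB: "length (filter P (st B)) = (if x = 1 then hd cs else 0) * length (filter P [(2, 1), (1, 2)])"
      by (simp add: B_def st_R cnt_rep)
    show ?thesis
      using stE stW stB Cons.IH[OF lcs' False] sl
      by (simp add: S2m_def algebra_simps)
  qed
qed

lemma ins_take_R: "0 < j \<Longrightarrow> insert 1 (set (take j (R c))) = {1, 2}"
proof -
  assume j: "0 < j"
  have "set (take j (R c)) \<subseteq> {1, 2}" using set_R[of c] set_take_subset[of j "R c"] by (rule order_trans[rotated])
  moreover have "take j (R c) \<noteq> []" using j by simp
  moreover have "hd (take j (R c)) = 2" using j by (simp add: hd_take)
  ultimately have "2 \<in> set (take j (R c))" by (metis hd_in_set)
  with \<open>set (take j (R c)) \<subseteq> {1, 2}\<close> show ?thesis by blast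
qed

lemma prefix_sets1: "j \<le> length (ex cs W) \<Longrightarrow> \<exists>i \<le> length W. insert 1 (set (take j (ex cs W))) = insert 1 (Suc ` set (take i W))"
proof (induction W arbitrary: cs j)
  case Nil then show ?case by simp
next
  case (Cons x xs)
  define cs' where "cs' = (if x = 1 then tl cs else cs)"
  define B where "B = (if x = 1 then R (hd cs) else [Suc x])"
  have exW: "ex cs (x # xs) = B @ ex cs' xs" by (simp add: B_def cs'_def)
  have insB: "insert 1 (set (take k B)) = {1, Suc x}" if k: "0 < k" for k
  proof (cases "x = 1")
    case True
    then show ?thesis using ins_take_R[OF k] by (simp add: B_def numeral_2_eq_2)
  next
    case False
    then have "take k B = [Suc x]" using k by (simp add: B_def take_Cons')
    then show ?thesis by simp
  qed
  show ?case
  proof (cases "j \<le> length B")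
    case True
    show ?thesis
    proof (cases "j = 0")
      case True then show ?thesis by (intro exI[of _ 0]) simp
    next
      case j0: False
      have "take j (ex cs (x # xs)) = take j B" using exW True by simp
      then have "insert 1 (set (take j (ex cs (x # xs)))) = insert 1 (Suc ` set (take 1 (x # xs)))"
        using insB[of j] j0 by simp
      then show ?thesis by (intro exI[of _ 1]) simp
    qed
  next
    case False
    then have "j - length B \<le> length (ex cs' xs)" using Cons.prems exW by simp
    then obtain i where i: "i \<le> length xs" "insert 1 (set (take (j - length B) (ex cs' xs))) = insert 1 (Suc ` set (take i xs))"
      using Cons.IH by blast
    have tk: "take j (ex cs (x # xs)) = B @ take (j - length B) (ex cs' xs)" using exW False by simp
    have lB: "0 < length B" by (simp add: B_def)
    have "take (length B) B = B" by simp
    then have sB: "insert 1 (set B) = {1, Suc x}" using insB[OF lB] by simp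
    have "insert 1 (set (take j (ex cs (x # xs)))) = insert 1 (set B) \<union> insert 1 (set (take (j - length B) (ex cs' xs)))"
      unfolding tk set_append by blast
    also have "\<dots> = {1, Suc x} \<union> insert 1 (Suc ` set (take i xs))" unfolding sB i(2) ..
    also have "\<dots> = insert 1 (Suc ` set (take (Suc i) (x # xs)))" by auto
    finally show ?thesis using i(1) by (intro exI[of _ "Suc i"]) simp
  qed
qed

lemma prefix_sets2: "i \<le> length W \<Longrightarrow> \<exists>j. insert 1 (set (take j (ex cs W))) = insert 1 (Suc ` set (take i W))"
proof -
  assume "i \<le> length W"
  have "W = take i W @ drop i W" by simp
  then have "ex cs W = ex cs (take i W) @ ex (drop (count_list (take i W) 1) cs) (drop i W)"
    by (metis ex_append)
  then have "take (length (ex cs (take i W))) (ex cs W) = ex cs (take i W)" by simp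
  then show ?thesis using set_ex by metis
qed



definition ok :: "nat list \<Rightarrow> bool" where
  "ok M \<longleftrightarrow> 0 \<notin> set M \<and> (\<forall>i<length M. M ! i = 1 \<longrightarrow> 0 < i \<and> M ! (i - 1) = 2 \<and> Suc i < length M \<and> M ! Suc i = 2)"

lemma okD: "ok M \<Longrightarrow> i < length M \<Longrightarrow> M ! i = 1 \<Longrightarrow> 0 < i \<and> M ! (i - 1) = 2 \<and> Suc i < length M \<and> M ! Suc i = 2"
  unfolding ok_def by blast

lemma okI: "0 \<notin> set M \<Longrightarrow> (\<And>i. i < length M \<Longrightarrow> M ! i = 1 \<Longrightarrow> 0 < i \<and> M ! (i - 1) = 2 \<and> Suc i < length M \<and> M ! Suc i = 2) \<Longrightarrow> ok M"
  unfolding ok_def by blast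

lemma ok_hd: "ok (y # rest) \<Longrightarrow> y \<noteq> 0 \<and> y \<noteq> 1"
proof -
  assume a: "ok (y # rest)"
  then have "y \<noteq> 0" unfolding ok_def by auto
  moreover have "y \<noteq> 1"
  proof
    assume "y = 1"
    then show False using okD[OF a, of 0] by simp
  qed
  ultimately show ?thesis by simp
qed

lemma ok_tl: "ok (y # rest) \<Longrightarrow> rest = [] \<or> hd rest \<noteq> 1 \<Longrightarrow> ok rest"
proof (rule okI)
  assume a: "ok (y # rest)" and h: "rest = [] \<or> hd rest \<noteq> 1"
  show "0 \<notin> set rest" using a unfolding ok_def by simp
  fix i assume i: "i < length rest" "rest ! i = 1"
  have b: "(y # rest) ! i = 2" "Suc (Suc i) < length (y # rest)" "(y # rest) ! Suc (Suc i) = 2"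
    using okD[OF a, of "Suc i"] i by simp_all
  have "i \<noteq> 0"
  proof
    assume "i = 0"
    then have "rest \<noteq> [] \<and> hd rest = 1" using i by (cases rest) auto
    then show False using h by blast
  qed
  then show "0 < i \<and> rest ! (i - 1) = 2 \<and> Suc i < length rest \<and> rest ! Suc i = 2"
    using b by (cases i) auto
qed

lemma ok_21: "ok (2 # 1 # rest1) \<Longrightarrow> \<exists>rest2. rest1 = 2 # rest2 \<and> ok (2 # rest2)"
proof -
  assume a: "ok (2 # 1 # rest1)"
  then have "Suc 1 < length (2 # 1 # rest1)" "(2 # 1 # rest1) ! Suc 1 = 2"
    using okD[OF a, of 1] by simp_all
  then obtain rest2 where r: "rest1 = 2 # rest2" by (cases rest1) auto
  have "ok (2 # rest2)"
  proof (rule okI)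
    show "0 \<notin> set (2 # rest2)" using a r unfolding ok_def by simp
    fix i assume i: "i < length (2 # rest2)" "(2 # rest2) ! i = 1"
    then have i0: "i \<noteq> 0" by (cases i) auto
    have b: "(2 # 1 # rest1) ! Suc i = 2" "Suc (Suc (Suc i)) < length (2 # 1 # rest1)"
       "(2 # 1 # rest1) ! Suc (Suc (Suc i)) = 2"
      using okD[OF a, of "Suc (Suc i)"] i r by simp_all
    show "0 < i \<and> (2 # rest2) ! (i - 1) = 2 \<and> Suc i < length (2 # rest2) \<and> (2 # rest2) ! Suc i = 2"
      using b i0 r by (cases i) auto
  qed
  then show ?thesis using r by blast
qed

lemma decomp_aux: "length M = n \<Longrightarrow> ok M \<Longrightarrow> \<exists>cs W. M = ex cs W \<and> length cs = count_list W 1 \<and> 0 \<notin> set W"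
proof (induction n arbitrary: M rule: less_induct)
  case (less n)
  show ?case
  proof (cases M)
    case Nil
    then show ?thesis by (intro exI[of _ "[]"]) simp
  next
    case (Cons y rest)
    have y: "y \<noteq> 0" "y \<noteq> 1" using ok_hd less.prems Cons by auto
    show ?thesis
    proof (cases "y = 2 \<and> rest \<noteq> [] \<and> hd rest = 1")
      case True
      then obtain rest1 where "rest = 1 # rest1" by (cases rest) auto
      then have M: "M = 2 # 1 # rest1" using Cons True by simp
      then obtain rest2 where r2: "rest1 = 2 # rest2" "ok (2 # rest2)" using ok_21 less.prems by blast
      have "length (2 # rest2) < n" using less.prems M r2 by simp
      then obtain cs W where cw: "2 # rest2 = ex cs W" "length cs = count_list W 1" "0 \<notin> set W"
        using less.IH r2(2) by blast
      then obtain z W' where W: "W = z # W'" by (cases W) auto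
      have z: "z = 1"
      proof (rule ccontr)
        assume "z \<noteq> 1"
        then have "ex cs W = Suc z # ex cs W'" using W by simp
        then show False using cw(1) \<open>z \<noteq> 1\<close> by simp
      qed
      obtain c cs' where cs: "cs = c # cs'" using cw(2) W z by (cases cs) auto
      have e: "2 # rest2 = R c @ ex cs' W'" using cw(1) W z cs by simp
      have "M = R (Suc c) @ ex cs' W'" using M r2 e by (simp add: R_Suc)
      then have "M = ex (Suc c # cs') (1 # W')" by simp
      moreover have "length (Suc c # cs') = count_list (1 # W') 1" using cw(2) W z cs by simp
      moreover have "0 \<notin> set (1 # W')" using cw(3) W by simp
      ultimately show ?thesis by blast
    next
      case False
      have okr: "ok rest"
      proof (rule ok_tl)
        show "ok (y # rest)" using less.prems Cons by simp
        show "rest = [] \<or> hd rest \<noteq> 1"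
        proof (cases "rest = [] \<or> hd rest \<noteq> 1")
          case True then show ?thesis .
        next
          case f: False
          then have "rest ! 0 = 1" "0 < length rest" by (cases rest; auto)+
          then have "(y # rest) ! (Suc 0 - 1) = 2" using okD[of M "Suc 0"] less.prems Cons by simp
          then have "y = 2" by simp
          then show ?thesis using False f by blast
        qed
      qed
      have "length rest < n" using less.prems Cons by simp
      then obtain cs W where cw: "rest = ex cs W" "length cs = count_list W 1" "0 \<notin> set W"
        using less.IH okr by blast
      show ?thesis
      proof (cases "y = 2")
        case True
        have "M = ex (0 # cs) (1 # W)" using Cons True cw(1) by simp
        moreover have "length (0 # cs) = count_list (1 # W) 1" using cw(2) by simp
        moreover have "0 \<notin> set (1 # W)" using cw(3) by simp
        ultimately show ?thesis by blast
      next
        case y2: False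
        then have "y - 1 \<noteq> 1" "y - 1 \<noteq> 0" using y by auto
        then have "M = ex cs ((y - 1) # W)" using Cons cw(1) y by simp
        moreover have "length cs = count_list ((y - 1) # W) 1" using cw(2) \<open>y - 1 \<noteq> 1\<close> by simp
        moreover have "0 \<notin> set ((y - 1) # W)" using cw(3) \<open>y - 1 \<noteq> 0\<close> by simp
        ultimately show ?thesis by blast
      qed
    qed
  qed
qed

lemma decomp: "ok M \<Longrightarrow> \<exists>cs W. M = ex cs W \<and> length cs = count_list W 1 \<and> 0 \<notin> set W"
  using decomp_aux by blast

lemma R_app_inj: "R c @ A = R d @ B \<Longrightarrow> (A = [] \<or> hd A \<noteq> 1) \<Longrightarrow> (B = [] \<or> hd B \<noteq> 1) \<Longrightarrow> c = d \<and> A = B"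
proof (induction c arbitrary: d)
  case 0
  then show ?case by (cases d) (auto simp: R_Suc)
next
  case (Suc c)
  then show ?case by (cases d) (auto simp: R_Suc)
qed

lemma hd_ex_ne1: "xs \<noteq> [] \<Longrightarrow> 0 \<notin> set xs \<Longrightarrow> hd (ex cs xs) \<noteq> 1"
  using hd_ex by (cases xs) auto

lemma ex_inj: "length cs = count_list W 1 \<Longrightarrow> 0 \<notin> set W \<Longrightarrow> length cs2 = count_list W2 1 \<Longrightarrow> 0 \<notin> set W2 \<Longrightarrow>
  ex cs W = ex cs2 W2 \<Longrightarrow> cs = cs2 \<and> W = W2"
proof (induction W arbitrary: cs cs2 W2)
  case Nil
  have "ex cs2 W2 = []" using Nil.prems(5) by simp
  then have "W2 = []" using ex_ne by blast
  then show ?case using Nil.prems(1,3) by simp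
next
  case (Cons x xs)
  have "W2 \<noteq> []"
  proof
    assume "W2 = []"
    then have "ex cs (x # xs) = []" using Cons.prems(5) by simp
    then show False using ex_ne[of "x # xs" cs] by simp
  qed
  then obtain y ys where W2: "W2 = y # ys" by (cases W2) auto
  have "hd (ex cs (x # xs)) = hd (ex cs2 W2)" using Cons.prems by simp
  then have xy: "x = y" using W2 hd_ex[of "x # xs" cs] hd_ex[of W2 cs2] by simp
  show ?case
  proof (cases "x = 1")
    case True
    obtain c cs' where cs: "cs = c # cs'" using Cons.prems(1) True by (cases cs) auto
    obtain d ds' where cs2: "cs2 = d # ds'" using Cons.prems(3) True W2 xy by (cases cs2) auto
    have "R c @ ex cs' xs = R d @ ex ds' ys" using Cons.prems(5) True cs cs2 W2 xy by simp
    moreover have "ex cs' xs = [] \<or> hd (ex cs' xs) \<noteq> 1" using hd_ex_ne1 Cons.prems(2) by (cases xs) auto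
    moreover have "ex ds' ys = [] \<or> hd (ex ds' ys) \<noteq> 1" using hd_ex_ne1 Cons.prems(4) W2 by (cases ys) auto
    ultimately have "c = d" "ex cs' xs = ex ds' ys" using R_app_inj by blast+
    moreover have "cs' = ds' \<and> xs = ys"
      using Cons.IH[OF _ _ _ _ \<open>ex cs' xs = ex ds' ys\<close>] Cons.prems True cs cs2 W2 xy by simp
    ultimately show ?thesis using cs cs2 W2 xy by simp
  next
    case False
    have "ex cs xs = ex cs2 ys" using Cons.prems(5) False W2 xy by simp
    then have "cs = cs2 \<and> xs = ys" using Cons.IH Cons.prems False W2 xy by simp
    then show ?thesis using W2 xy by simp
  qed
qed



lemma take_Suc_set: "i < length w \<Longrightarrow> set (take (Suc i) w) = insert (w ! i) (set (take i w))"
  by (simp add: take_Suc_conv_app_nth)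

lemma minimal_seg: "minimal_walk w \<Longrightarrow> i \<le> length w \<Longrightarrow> \<exists>n. set (take i w) = {1..n}"
proof (induction i)
  case 0 then show ?case by (intro exI[of _ 0]) simp
next
  case (Suc i)
  then obtain n where n: "set (take i w) = {1..n}" by auto
  have il: "i < length w" using Suc.prems by simp
  show ?case
  proof (cases "w ! i \<in> set (take i w)")
    case True
    then show ?thesis using n take_Suc_set[OF il] by (intro exI[of _ n]) (simp add: insert_absorb)
  next
    case False
    then have "w ! i = card (set (take i w)) + 1" using Suc.prems il unfolding minimal_walk_def by blast
    then have "w ! i = Suc n" using n by simp
    then show ?thesis using n take_Suc_set[OF il] by (intro exI[of _ "Suc n"]) auto
  qed
qed

lemma seg_minimal: "w \<noteq> [] \<Longrightarrow> (\<And>i. i \<le> length w \<Longrightarrow> \<exists>n. set (take i w) = {1..n}) \<Longrightarrow> minimal_walk w"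
  unfolding minimal_walk_def
proof (intro conjI allI impI)
  assume ne: "w \<noteq> []" and seg: "\<And>i. i \<le> length w \<Longrightarrow> \<exists>n. set (take i w) = {1..n}"
  show "w \<noteq> []" by fact
  have new: "w ! i = card (set (take i w)) + 1" if i: "i < length w" "w ! i \<notin> set (take i w)" for i
  proof -
    obtain n where n: "set (take i w) = {1..n}" using seg i by fastforce
    obtain m where m: "set (take (Suc i) w) = {1..m}" using seg i by (metis Suc_leI)
    have e: "insert (w ! i) {1..n} = {1..m}" using take_Suc_set[OF i(1)] n m by simp
    have ni: "w ! i \<notin> {1..n}" using i n by simp
    have "card (insert (w ! i) {1..n}) = Suc n" using ni by simp
    then have "m = Suc n" using e by simp
    then have "w ! i \<in> {1..Suc n}" using e by blast
    then have "w ! i = Suc n" using ni by simp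
    then show ?thesis using n by simp
  qed
  have "w ! 0 = card (set (take 0 w)) + 1" using new[of 0] ne by simp
  then show "hd w = 1" using ne by (simp add: hd_conv_nth)
  fix i assume "i < length w" "w ! i \<notin> set (take i w)"
  then show "w ! i = card (set (take i w)) + 1" using new by blast
qed

lemma shift_seg: "insert 1 (Suc ` {1..n}) = {1..Suc n}"
proof (intro set_eqI iffI)
  fix x assume "x \<in> insert 1 (Suc ` {1..n})" then show "x \<in> {1..Suc n}" by auto
next
  fix x assume x: "x \<in> {1..Suc n}"
  show "x \<in> insert 1 (Suc ` {1..n})"
  proof (cases "x = 1")
    case False
    then have "x = Suc (x - 1)" "x - 1 \<in> {1..n}" using x by auto
    then show ?thesis by (metis imageI insertI2)
  qed simp
qed

lemma unshift_seg: "0 \<notin> T \<Longrightarrow> insert 1 (Suc ` T) = {1..m} \<Longrightarrow> T = {1..m - 1}"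
proof -
  assume a: "0 \<notin> T" "insert 1 (Suc ` T) = {1..m}"
  show ?thesis
  proof (intro set_eqI iffI)
    fix x assume "x \<in> T"
    then have "Suc x \<in> {1..m}" "x \<noteq> 0" using a by auto
    then show "x \<in> {1..m - 1}" by auto
  next
    fix x assume "x \<in> {1..m - 1}"
    then have "Suc x \<in> insert 1 (Suc ` T)" "x \<noteq> 0" using a(2) by auto
    then show "x \<in> T" by auto
  qed
qed

definition good :: "nat list \<Rightarrow> nat list \<Rightarrow> bool" where
  "good cs W \<longleftrightarrow> W \<noteq> [] \<and> hd W = 1 \<and> last W = 1 \<and> 0 \<notin> set W \<and> length cs = count_list W 1"

lemma set_Psi: "set (Psi cs W) = insert 1 (Suc ` set W)"
  using set_ex[of cs W] unfolding Psi_def by auto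

lemma take_Psi_set: "j \<le> Suc (length (ex cs W)) \<Longrightarrow> set (take (Suc j) (Psi cs W)) = insert 1 (set (take j (ex cs W)))"
  unfolding Psi_def by (cases "j \<le> length (ex cs W)") (auto simp: not_le)

lemma minimal_Psi: "minimal_walk W \<Longrightarrow> minimal_walk (Psi cs W)"
proof (rule seg_minimal)
  assume m: "minimal_walk W"
  show "Psi cs W \<noteq> []" by (simp add: Psi_def)
  fix k assume k: "k \<le> length (Psi cs W)"
  show "\<exists>n. set (take k (Psi cs W)) = {1..n}"
  proof (cases k)
    case 0 then show ?thesis by (intro exI[of _ 0]) simp
  next
    case (Suc j)
    then have j: "j \<le> Suc (length (ex cs W))" using k by (simp add: Psi_def)
    define j' where "j' = min j (length (ex cs W))"
    have "take j (ex cs W) = take j' (ex cs W)" by (simp add: j'_def min_def)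
    moreover obtain i where i: "i \<le> length W" "insert 1 (set (take j' (ex cs W))) = insert 1 (Suc ` set (take i W))"
      using prefix_sets1[of j' cs W] by (auto simp: j'_def)
    moreover obtain n where "set (take i W) = {1..n}" using minimal_seg[OF m i(1)] by blast
    ultimately have "set (take k (Psi cs W)) = {1..Suc n}"
      using take_Psi_set[OF j] Suc shift_seg by simp
    then show ?thesis by blast
  qed
qed

lemma minimal_Psi_rev: "minimal_walk (Psi cs W) \<Longrightarrow> W \<noteq> [] \<Longrightarrow> 0 \<notin> set W \<Longrightarrow> minimal_walk W"
proof (rule seg_minimal)
  assume m: "minimal_walk (Psi cs W)" and ne: "W \<noteq> []" and z: "0 \<notin> set W"
  show "W \<noteq> []" by fact
  fix i assume i: "i \<le> length W"
  obtain j where j: "insert 1 (set (take j (ex cs W))) = insert 1 (Suc ` set (take i W))"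
    using prefix_sets2[OF i] by blast
  define j' where "j' = min j (length (ex cs W))"
  have "take j (ex cs W) = take j' (ex cs W)" by (simp add: j'_def min_def)
  moreover have jl: "j' \<le> Suc (length (ex cs W))" by (simp add: j'_def)
  moreover have "Suc j' \<le> length (Psi cs W)" by (simp add: j'_def Psi_def)
  then obtain m' where "set (take (Suc j') (Psi cs W)) = {1..m'}" using minimal_seg[OF m] by blast
  ultimately have "insert 1 (Suc ` set (take i W)) = {1..m'}" using take_Psi_set[OF jl] j by simp
  moreover have "0 \<notin> set (take i W)" using z set_take_subset by fastforce
  ultimately show "\<exists>n. set (take i W) = {1..n}" using unshift_seg by blast
qed



lemma st_Cons: "xs \<noteq> [] \<Longrightarrow> st (x # xs) = (x, hd xs) # st xs"
  by (cases xs) auto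

lemma st_Psi: "good cs W \<Longrightarrow> st (Psi cs W) = (1, 2) # st (ex cs W) @ [(2, 1)]"
proof -
  assume g: "good cs W"
  then have ne: "ex cs W \<noteq> []" "hd (ex cs W) = 2" "last (ex cs W) = 2"
    using ex_ne hd_ex last_ex unfolding good_def by auto
  then have e: "ex cs W = 2 # tl (ex cs W)" by (metis list.collapse)
  have "st (Psi cs W) = (1, hd (ex cs W @ [1])) # st (ex cs W @ [1])"
    unfolding Psi_def by (rule st_Cons) simp
  then have "st (Psi cs W) = (1, 2) # st (ex cs W @ [1])" using ne by simp
  also have "st (ex cs W @ [1]) = st (ex cs W) @ [(2, 1)]" using ne by (simp add: st_snoc)
  finally show ?thesis by simp
qed

lemma set_st: "set (st W) \<subseteq> set W \<times> set W"
proof -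
  have "set (tl W) \<subseteq> set W" by (cases W) auto
  then show ?thesis unfolding st_def by (auto dest: set_zip_leftD set_zip_rightD)
qed

lemma count_Psi: "good cs W \<Longrightarrow> length (filter P (st (Psi cs W))) =
   length (filter P [(1, 2), (2, 1)]) + length (filter (P \<circ> S2m) (st W)) + sum_list cs * length (filter P [(2, 1), (1, 2)])"
  using count_st_ex[of cs W P] st_Psi[of cs W] unfolding good_def by auto

lemma filter_st_cong: "0 \<notin> set W \<Longrightarrow> (\<And>a b. 0 < a \<Longrightarrow> 0 < b \<Longrightarrow> P (a, b) = Q (a, b)) \<Longrightarrow>
   length (filter P (st W)) = length (filter Q (st W))"
proof -
  assume z: "0 \<notin> set W" and pq: "\<And>a b. 0 < a \<Longrightarrow> 0 < b \<Longrightarrow> P (a, b) = Q (a, b)"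
  have "filter P (st W) = filter Q (st W)"
  proof (rule filter_cong[OF refl])
    fix s assume "s \<in> set (st W)"
    then have "s \<in> set W \<times> set W" using set_st by blast
    then obtain a b where "s = (a, b)" "a \<in> set W" "b \<in> set W" by blast
    then show "P s = Q s" using z pq by (metis gr0I)
  qed
  then show ?thesis by simp
qed

lemma good_len: "good cs W \<Longrightarrow> walk_len (Psi cs W) = walk_len W + 2 * sum_list cs + 2"
  using length_ex[of cs W] unfolding good_def walk_len_def Psi_def by auto

lemma good_root: "good cs W \<Longrightarrow> root_steps (Psi cs W) = 1 + sum_list cs"
proof -
  assume g: "good cs W"
  have "length (filter ((\<lambda>(a, b). a = 1) \<circ> S2m) (st W)) = length (filter (\<lambda>_. False) (st W))"
    using g unfolding good_def by (intro filter_st_cong) (auto simp: S2m_def)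
  then show ?thesis unfolding root_steps_st count_Psi[OF g] by simp
qed

lemma good_vcount: "good cs W \<Longrightarrow> vcount (Psi cs W) = root_steps W"
proof -
  assume g: "good cs W"
  have "length (filter ((\<lambda>(a, b). a = 2 \<and> b \<noteq> 1) \<circ> S2m) (st W)) = length (filter (\<lambda>(a, b). a = 1) (st W))"
    using g unfolding good_def by (intro filter_st_cong) (auto simp: S2m_def)
  then show ?thesis unfolding vcount_st root_steps_st count_Psi[OF g] by simp
qed

lemma good_mult12: "good cs W \<Longrightarrow> edge_mult (Psi cs W) {1, 2} = 2 + 2 * sum_list cs"
proof -
  assume g: "good cs W"
  have "length (filter ((\<lambda>(a, b). {a, b} = {1, 2}) \<circ> S2m) (st W)) = length (filter (\<lambda>_. False) (st W))"
    using g unfolding good_def by (intro filter_st_cong) (auto simp: S2m_def doubleton_eq_iff)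
  moreover have "{2, 1} = {1, 2::nat}" by auto
  ultimately show ?thesis unfolding edge_mult_st count_Psi[OF g] by simp
qed

lemma good_mult: "good cs W \<Longrightarrow> e \<in> walk_edges W \<Longrightarrow> edge_mult (Psi cs W) (Suc ` e) = edge_mult W e"
proof -
  assume g: "good cs W" and e: "e \<in> walk_edges W"
  have z: "0 \<notin> e" using walk_edges_sub[OF e] g unfolding good_def by auto
  have "length (filter ((\<lambda>(a, b). {a, b} = Suc ` e) \<circ> S2m) (st W)) = length (filter (\<lambda>(a, b). {a, b} = e) (st W))"
  proof (rule filter_st_cong)
    show "0 \<notin> set W" using g unfolding good_def by simp
    fix a b :: nat
    have "({Suc a, Suc b} = Suc ` e) = (Suc ` {a, b} = Suc ` e)" by simp
    also have "\<dots> = ({a, b} = e)" by (rule inj_image_eq_iff[OF inj_Suc])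
    finally show "((\<lambda>(a, b). {a, b} = Suc ` e) \<circ> S2m) (a, b) = (case (a, b) of (a, b) \<Rightarrow> {a, b} = e)"
      by (simp add: S2m_def)
  qed
  moreover have "{1, 2} \<noteq> Suc ` e" "{2, 1} \<noteq> Suc ` e" using z by (auto simp: image_iff) 
  ultimately show ?thesis unfolding edge_mult_st count_Psi[OF g] by simp
qed

lemma in_set_count: "x \<in> set xs \<longleftrightarrow> 0 < length (filter (\<lambda>y. y = x) xs)"
  by (induction xs) auto

lemma set_st_ex: "good cs W \<Longrightarrow> set (st (ex cs W)) \<union> {(2, 1), (1, 2)} = S2m ` set (st W) \<union> {(2, 1), (1, 2)}"
proof (intro set_eqI)
  fix t
  assume g: "good cs W"
  have c: "length (filter (\<lambda>y. y = t) (st (ex cs W))) = length (filter (\<lambda>y. S2m y = t) (st W)) +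
      sum_list cs * length (filter (\<lambda>y. y = t) [(2, 1), (1, 2)])"
    using count_st_ex[of cs W "\<lambda>y. y = t"] g unfolding good_def by (simp add: comp_def)
  show "t \<in> set (st (ex cs W)) \<union> {(2, 1), (1, 2)} \<longleftrightarrow> t \<in> S2m ` set (st W) \<union> {(2, 1), (1, 2)}"
  proof (cases "t \<in> {(2, 1), (1, 2)}")
    case True then show ?thesis by blast
  next
    case False
    then have "length (filter (\<lambda>y. y = t) [(2, 1), (1, 2)]) = 0" by auto
    then have "length (filter (\<lambda>y. y = t) (st (ex cs W))) = length (filter (\<lambda>y. S2m y = t) (st W))"
      using c by simp
    then have "t \<in> set (st (ex cs W)) \<longleftrightarrow> 0 < length (filter (\<lambda>y. S2m y = t) (st W))"
      using in_set_count[of t "st (ex cs W)"] by simp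
    also have "\<dots> \<longleftrightarrow> t \<in> S2m ` set (st W)"
      unfolding length_greater_0_conv filter_empty_conv by blast
    finally show ?thesis using False by simp
  qed
qed

lemma edges_Psi: "good cs W \<Longrightarrow> walk_edges (Psi cs W) = insert {1, 2} ((`) Suc ` walk_edges W)"
proof -
  assume g: "good cs W"
  let ?f = "\<lambda>(a::nat, b::nat). {a, b}"
  have "set (st (Psi cs W)) = set (st (ex cs W)) \<union> {(2, 1), (1, 2)}" using st_Psi[OF g] by auto
  also have "\<dots> = S2m ` set (st W) \<union> {(2, 1), (1, 2)}" using set_st_ex[OF g] .
  finally have "walk_edges (Psi cs W) = ?f ` (S2m ` set (st W) \<union> {(2, 1), (1, 2)})"
    unfolding walk_edges_st by simp
  also have "\<dots> = insert {1, 2} (?f ` S2m ` set (st W))" by (auto simp: insert_commute)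
  also have "?f ` S2m ` set (st W) = (`) Suc ` walk_edges W"
    unfolding walk_edges_st image_image by (intro image_cong) (auto simp: S2m_def)
  finally show ?thesis .
qed

lemma one_notin_shift: "good cs W \<Longrightarrow> e \<in> walk_edges W \<Longrightarrow> 1 \<notin> Suc ` e"
  using walk_edges_sub[of e W] unfolding good_def by auto

lemma card_edges_Psi: "good cs W \<Longrightarrow> card (walk_edges (Psi cs W)) = card (walk_edges W) + 1"
proof -
  assume g: "good cs W"
  have "{1, 2} \<notin> (`) Suc ` walk_edges W" using one_notin_shift[OF g] by auto
  moreover have "card ((`) Suc ` walk_edges W) = card (walk_edges W)"
    by (rule card_image) (simp add: inj_on_def inj_image_eq_iff)
  ultimately show ?thesis using edges_Psi[OF g] by simp
qed

lemma card_set_Psi: "good cs W \<Longrightarrow> card (set (Psi cs W)) = card (set W) + 1"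
proof -
  assume g: "good cs W"
  have "1 \<notin> Suc ` set W" using g unfolding good_def by auto
  moreover have "card (Suc ` set W) = card (set W)" by (simp add: card_image)
  ultimately show ?thesis using set_Psi[of cs W] by simp
qed

lemma loopfree_Psi: "good cs W \<Longrightarrow> loopfree (walk_edges (Psi cs W)) \<longleftrightarrow> loopfree (walk_edges W)"
proof -
  assume g: "good cs W"
  have c: "card (Suc ` e) = card e" for e :: "nat set" by (simp add: card_image)
  show ?thesis unfolding loopfree_def edges_Psi[OF g] using c by simp
qed

lemma tree_Psi: "good cs W \<Longrightarrow> is_tree (set (Psi cs W)) (walk_edges (Psi cs W)) \<longleftrightarrow> is_tree (set W) (walk_edges W)"
proof -
  assume g: "good cs W"
  have ne: "Psi cs W \<noteq> []" "W \<noteq> []" using g unfolding good_def Psi_def by auto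
  show ?thesis unfolding tree_iff_count[OF ne(1)] tree_iff_count[OF ne(2)]
    using loopfree_Psi[OF g] card_edges_Psi[OF g] card_set_Psi[OF g] by simp
qed



lemma map_fst_st: "map fst (st W) = butlast W"
  unfolding st_def by (simp add: map_fst_zip_take butlast_conv_take)

lemma root_count: "W \<noteq> [] \<Longrightarrow> last W = 1 \<Longrightarrow> count_list W 1 = root_steps W + 1"
proof -
  assume a: "W \<noteq> []" "last W = 1"
  have "root_steps W = length (filter (\<lambda>a. a = 1) (map fst (st W)))"
    unfolding root_steps_st by (simp add: comp_def split_def)
  also have "\<dots> = count_list (butlast W) 1"
  proof -
    have eqf: "(\<lambda>a::nat. a = 1) = (=) 1" by (rule ext) auto
    show ?thesis unfolding eqf by (simp add: map_fst_st count_list_eq_length_filter)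
  qed
  finally have "root_steps W = count_list (butlast W) 1" .
  moreover have "count_list (butlast W @ [last W]) 1 = count_list (butlast W) 1 + 1" using a(2) by simp
  then have "count_list W 1 = count_list (butlast W) 1 + 1" using append_butlast_last_id[OF a(1)] by simp
  ultimately show ?thesis by simp
qed

lemma Psi_proper: "good cs W \<Longrightarrow> proper col' (walk_edges W) \<Longrightarrow>
  proper (\<lambda>x. if x = 1 then \<not> col' 1 else col' (x - 1)) (walk_edges (Psi cs W))"
  unfolding proper_def
proof (intro allI impI)
  fix a b
  assume g: "good cs W" and p: "\<forall>a b. {a, b} \<in> walk_edges W \<longrightarrow> col' a \<noteq> col' b"
    and ab: "{a, b} \<in> walk_edges (Psi cs W)"
  let ?col = "\<lambda>x. if x = 1 then \<not> col' 1 else col' (x - 1)"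
  show "?col a \<noteq> ?col b"
  proof (cases "{a, b} = {1, 2}")
    case True
    then have "(a = 1 \<and> b = 2) \<or> (a = 2 \<and> b = 1)" by (auto simp: doubleton_eq_iff)
    then show ?thesis by auto
  next
    case False
    then obtain e where e: "e \<in> walk_edges W" "{a, b} = Suc ` e" using ab edges_Psi[OF g] by auto
    then obtain c d where cd: "e = {c, d}" using walk_edges_form by blast
    have cw: "c \<in> set W" "d \<in> set W" using walk_edges_sub[OF e(1)] cd by auto
    have zw: "0 \<notin> set W" using g unfolding good_def by simp
    have nz: "c \<noteq> 0" "d \<noteq> 0"
    proof -
      show "c \<noteq> 0" proof assume "c = 0" then show False using cw(1) zw by simp qed
      show "d \<noteq> 0" proof assume "d = 0" then show False using cw(2) zw by simp qed
    qed
    have "{a, b} = {Suc c, Suc d}" using e(2) cd by simp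
    then have "(a = Suc c \<and> b = Suc d) \<or> (a = Suc d \<and> b = Suc c)" by (auto simp: doubleton_eq_iff)
    moreover have "col' c \<noteq> col' d" using p e(1) cd by blast
    ultimately show ?thesis using nz by auto
  qed
qed

lemma beta_Psi: "good cs W \<Longrightarrow> is_tree (set W) (walk_edges W) \<Longrightarrow>
  beta (Psi cs W) = 1 + card (set W) - beta W \<and> beta W \<le> card (set W)"
proof -
  assume g: "good cs W" and t: "is_tree (set W) (walk_edges W)"
  have ne: "W \<noteq> []" "1 \<in> set W" using g unfolding good_def by (metis list.set_sel(1))+
  obtain col' where c': "proper col' (walk_edges W)" using tree_coloring[OF ne(1) t] by blast
  let ?col = "\<lambda>x. if x = 1 then \<not> col' 1 else col' (x - 1)"
  have bW: "beta W = card {x \<in> set W. col' x = col' 1}" using beta_col[OF ne c'] .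
  have "Psi cs W \<noteq> []" "1 \<in> set (Psi cs W)" by (simp_all add: Psi_def)
  then have bP: "beta (Psi cs W) = card {x \<in> set (Psi cs W). ?col x = ?col 1}"
    using beta_col Psi_proper[OF g c'] by blast
  have z: "0 \<notin> set W" using g unfolding good_def by simp
  have "{x \<in> set (Psi cs W). ?col x = ?col 1} = insert 1 (Suc ` {y \<in> set W. col' y \<noteq> col' 1})"
    unfolding set_Psi using z by (auto simp: image_iff)
  moreover have "1 \<notin> Suc ` {y \<in> set W. col' y \<noteq> col' 1}" using z by auto
  ultimately have "beta (Psi cs W) = 1 + card {y \<in> set W. col' y \<noteq> col' 1}"
    using bP by (simp add: card_image)
  moreover have "{y \<in> set W. col' y \<noteq> col' 1} = set W - {y \<in> set W. col' y = col' 1}" by auto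
  then have "card {y \<in> set W. col' y \<noteq> col' 1} = card (set W) - beta W"
    using bW by (simp add: card_Diff_subset)
  moreover have "beta W \<le> card (set W)" using bW by (simp add: card_mono)
  ultimately show ?thesis by simp
qed

lemma prod_Psi: "good cs W \<Longrightarrow>
  (\<Prod>e\<in>walk_edges (Psi cs W). p * X (edge_mult (Psi cs W) e)) =
   (p * X (2 + 2 * sum_list cs)) * (\<Prod>e\<in>walk_edges W. p * X (edge_mult W e))"
proof -
  assume g: "good cs W"
  have n: "{1, 2} \<notin> (`) Suc ` walk_edges W" using one_notin_shift[OF g] by auto
  have inj: "inj_on ((`) Suc) (walk_edges W)" by (simp add: inj_on_def inj_image_eq_iff)
  have "(\<Prod>e\<in>walk_edges (Psi cs W). p * X (edge_mult (Psi cs W) e)) =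
     p * X (edge_mult (Psi cs W) {1, 2}) * (\<Prod>e\<in>(`) Suc ` walk_edges W. p * X (edge_mult (Psi cs W) e))"
    unfolding edges_Psi[OF g] using n by simp
  also have "(\<Prod>e\<in>(`) Suc ` walk_edges W. p * X (edge_mult (Psi cs W) e)) =
      (\<Prod>e\<in>walk_edges W. p * X (edge_mult (Psi cs W) (Suc ` e)))"
    using prod.reindex[OF inj] by simp
  also have "\<dots> = (\<Prod>e\<in>walk_edges W. p * X (edge_mult W e))"
    using good_mult[OF g] by simp
  finally show ?thesis using good_mult12[OF g] by simp
qed

lemma theta_Psi:
  assumes g: "good cs W" and t: "is_tree (set W) (walk_edges W)"
  shows "theta1 \<alpha> p X (Psi cs W) = \<alpha> * (p * X (2 + 2 * sum_list cs)) * theta2 \<alpha> p X W"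
    and "theta2 \<alpha> p X (Psi cs W) = (1 - \<alpha>) * (p * X (2 + 2 * sum_list cs)) * theta1 \<alpha> p X W"
proof -
  define n where "n = card (set W)"
  define b where "b = beta W"
  define P where "P = (\<Prod>e\<in>walk_edges W. p * X (edge_mult W e))"
  have bb: "beta (Psi cs W) = Suc (n - b)" "b \<le> n" using beta_Psi[OF g t] unfolding n_def b_def by auto
  have cn: "card (set (Psi cs W)) = Suc n" using card_set_Psi[OF g] unfolding n_def by simp
  have cd: "card (set (Psi cs W)) - beta (Psi cs W) = b" using bb cn by simp
  have pr: "(\<Prod>e\<in>walk_edges (Psi cs W). p * X (edge_mult (Psi cs W) e)) = (p * X (2 + 2 * sum_list cs)) * P"
    using prod_Psi[OF g] unfolding P_def .
  show "theta1 \<alpha> p X (Psi cs W) = \<alpha> * (p * X (2 + 2 * sum_list cs)) * theta2 \<alpha> p X W"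
    unfolding theta1_def theta2_def walk_vertices_def pr bb(1) cn
    using bb(2) by (simp add: Suc_diff_le n_def[symmetric] b_def[symmetric] P_def[symmetric] algebra_simps)
  show "theta2 \<alpha> p X (Psi cs W) = (1 - \<alpha>) * (p * X (2 + 2 * sum_list cs)) * theta1 \<alpha> p X W"
    unfolding theta1_def theta2_def walk_vertices_def pr bb(1) cn
    using bb(2) by (simp add: Suc_diff_le n_def[symmetric] b_def[symmetric] P_def[symmetric] algebra_simps)
qed



definition CS :: "nat \<Rightarrow> nat \<Rightarrow> nat list set" where
  "CS v f = {cs. length cs = v + 1 \<and> sum_list cs = f - 1}"

lemma Lam_props: "W \<in> Lam l r \<Longrightarrow> W \<noteq> [] \<and> hd W = 1 \<and> last W = 1 \<and> 0 \<notin> set W \<and> minimal_walk W \<and>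
   is_tree (set W) (walk_edges W) \<and> walk_len W = 2 * l \<and> root_steps W = r"
proof -
  assume "W \<in> Lam l r"
  then have a: "closed_walk W" "minimal_walk W" "is_tree (set W) (walk_edges W)" "walk_len W = 2 * l" "root_steps W = r"
    unfolding Lam_def essential_def walk_vertices_def by auto
  then have "W \<noteq> []" "hd W = 1" "last W = 1" "0 \<notin> set W"
    unfolding closed_walk_def minimal_walk_def by auto
  then show ?thesis using a by simp
qed

lemma LamI: "W \<noteq> [] \<Longrightarrow> hd W = 1 \<Longrightarrow> last W = 1 \<Longrightarrow> 0 \<notin> set W \<Longrightarrow> minimal_walk W \<Longrightarrow>
   is_tree (set W) (walk_edges W) \<Longrightarrow> walk_len W = 2 * l \<Longrightarrow> root_steps W = r \<Longrightarrow> W \<in> Lam l r"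
  unfolding Lam_def essential_def closed_walk_def walk_vertices_def
  by (auto intro: gr0I)

lemma Psi_Lam3:
  assumes f: "1 \<le> f" and cs: "cs \<in> CS v f" and W: "W \<in> Lam u v"
  shows "Psi cs W \<in> Lam3 (f + u) f v"
proof -
  have Wp: "W \<noteq> []" "hd W = 1" "last W = 1" "0 \<notin> set W" "minimal_walk W"
     "is_tree (set W) (walk_edges W)" "walk_len W = 2 * u" "root_steps W = v"
    using Lam_props[OF W] by auto
  have g: "good cs W" using Wp cs root_count[of W] unfolding good_def CS_def by simp
  have sc: "sum_list cs = f - 1" using cs unfolding CS_def by simp
  have "Psi cs W \<in> Lam (f + u) f"
  proof (rule LamI)
    show "Psi cs W \<noteq> []" "hd (Psi cs W) = 1" "last (Psi cs W) = 1" by (simp_all add: Psi_def)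
    show "0 \<notin> set (Psi cs W)" unfolding set_Psi by auto
    show "minimal_walk (Psi cs W)" using minimal_Psi[OF Wp(5)] .
    show "is_tree (set (Psi cs W)) (walk_edges (Psi cs W))" using tree_Psi[OF g] Wp(6) by simp
    show "walk_len (Psi cs W) = 2 * (f + u)" using good_len[OF g] Wp(7) sc f by simp
    show "root_steps (Psi cs W) = f" using good_root[OF g] sc f by simp
  qed
  moreover have "{e \<in> walk_edges (Psi cs W). 1 \<in> e} = {{1, 2}}"
  proof -
    have z: "0 \<notin> e" if "e \<in> walk_edges W" for e using walk_edges_sub[OF that] Wp(4) by blast
    show ?thesis unfolding edges_Psi[OF g] using z by auto
  qed
  moreover have "vcount (Psi cs W) = v" using good_vcount[OF g] Wp(8) by simp
  ultimately show ?thesis unfolding Lam3_def Lam2_def by simp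
qed

lemma step_edge: "i < walk_len w \<Longrightarrow> {w ! i, w ! Suc i} \<in> walk_edges w"
  unfolding walk_edges_def by auto

lemma decomposition:
  assumes f: "1 \<le> f" and w: "w \<in> Lam2 (f + u) f"
  shows "\<exists>cs W. w = Psi cs W \<and> cs \<in> CS (vcount w) f \<and> W \<in> Lam u (vcount w)"
proof -
  have wL: "w \<in> Lam (f + u) f" and c1: "card {e \<in> walk_edges w. 1 \<in> e} = 1" using w unfolding Lam2_def by auto
  have wp: "w \<noteq> []" "hd w = 1" "last w = 1" "0 \<notin> set w" "minimal_walk w"
     "is_tree (set w) (walk_edges w)" "walk_len w = 2 * (f + u)" "root_steps w = f"
    using Lam_props[OF wL] by auto
  have lf: "loopfree (walk_edges w)" using tree_iff_count wp(1,6) by blast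
  define L where "L = length w"
  have wl: "walk_len w = L - 1" by (simp add: walk_len_def L_def)
  have L3: "3 \<le> L" using wp(7) f wl by simp
  have neq: "w ! i \<noteq> w ! Suc i" if "i < walk_len w" for i
  proof
    assume "w ! i = w ! Suc i"
    then have "{w ! i} \<in> walk_edges w" using step_edge[OF that] by simp
    then show False using lf unfolding loopfree_def by fastforce
  qed
  have w0: "w ! 0 = 1" using wp(1,2) by (simp add: hd_conv_nth)
  have w1: "w ! 1 = 2"
  proof -
    have "0 < walk_len w" using wl L3 by simp
    then have "w ! 1 \<noteq> 1" using neq[of 0] w0 by simp
    moreover have "set (take 1 w) = {1}" using wp(1) w0 by (cases w) auto
    moreover have "1 < length w" using L3 L_def by simp
    moreover have "w ! 1 \<notin> set (take 1 w) \<longrightarrow> w ! 1 = card (set (take 1 w)) + 1"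
      using wp(5) \<open>1 < length w\<close> unfolding minimal_walk_def by blast
    ultimately show ?thesis by simp
  qed
  have e12: "{1, 2} \<in> walk_edges w" using step_edge[of 0 w] w0 w1 wl L3 by simp
  have uniq: "e = {1, 2}" if "e \<in> walk_edges w" "1 \<in> e" for e
  proof -
    obtain a where a: "{e \<in> walk_edges w. 1 \<in> e} = {a}" by (rule card_1_singletonE[OF c1])
    have "e \<in> {e \<in> walk_edges w. 1 \<in> e}" using that by simp
    then have ea: "e = a" unfolding a by simp
    have "{1, 2} \<in> {e \<in> walk_edges w. 1 \<in> e}" using e12 by simp
    then have "{1, 2} = a" unfolding a by simp
    then show ?thesis using ea by simp
  qed
  have nb1: "w ! Suc i = 2" if "i < walk_len w" "w ! i = 1" for i
  proof -
    have "{1, w ! Suc i} = {1, 2}" using uniq[OF step_edge[OF that(1)]] that(2) by simp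
    then show ?thesis by (auto simp: doubleton_eq_iff)
  qed
  have nb2: "w ! i = 2" if "i < walk_len w" "w ! Suc i = 1" for i
  proof -
    have "{w ! i, 1} = {1, 2}" using uniq[OF step_edge[OF that(1)]] that(2) by simp
    then show ?thesis by (auto simp: doubleton_eq_iff)
  qed
  define M where "M = butlast (tl w)"
  have lM: "length M = L - 2" by (simp add: M_def L_def)
  have Mk: "M ! k = w ! Suc k" if "k < L - 2" for k
    using that by (simp add: M_def L_def nth_butlast nth_tl)
  have wM: "w = 1 # M @ [1]"
  proof -
    have "tl w \<noteq> []" using L3 L_def by (cases w) auto
    then have "tl w = M @ [1]" using wp(3) wp(1) unfolding M_def
      by (metis append_butlast_last_id last_tl)
    then show ?thesis using wp(1,2) by (metis list.collapse)
  qed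
  have okM: "ok M"
  proof (rule okI)
    show "0 \<notin> set M" using wp(4) wM by auto
    fix k assume k: "k < length M" "M ! k = 1"
    have kL: "k < L - 2" using k lM by simp
    have ws: "w ! Suc k = 1" using Mk[OF kL] k by simp
    have kw: "k < walk_len w" using kL wl by simp
    have wk: "w ! k = 2" using nb2[OF kw ws] .
    have k0: "k \<noteq> 0"
    proof
      assume "k = 0"
      then have "w ! Suc 0 = 1" using ws by simp
      then show False using w1 by simp
    qed
    have sk: "Suc k < L - 2"
    proof (rule ccontr)
      assume "\<not> Suc k < L - 2"
      then have "Suc (Suc k) = L - 1" using kL by simp
      then have "w ! Suc (Suc k) = 1" using wp(1,3) L_def by (simp add: last_conv_nth)
      moreover have "w ! Suc (Suc k) = 2" using nb1[of "Suc k"] ws wl kL by simp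
      ultimately show False by simp
    qed
    have "M ! (k - 1) = 2" using Mk[of "k - 1"] kL k0 wk by simp
    moreover have "M ! Suc k = 2" using Mk[OF sk] nb1[of "Suc k"] ws wl kL by simp
    ultimately show "0 < k \<and> M ! (k - 1) = 2 \<and> Suc k < length M \<and> M ! Suc k = 2"
      using k0 sk lM by simp
  qed
  obtain cs W where cw: "M = ex cs W" "length cs = count_list W 1" "0 \<notin> set W" using decomp[OF okM] by blast
  have Mne: "M \<noteq> []" using lM L3 by auto
  then have Wne: "W \<noteq> []" using cw(1) by auto
  have "hd M = 2" using Mk[of 0] L3 w1 Mne by (simp add: hd_conv_nth)
  then have hW: "hd W = 1" using hd_ex[OF Wne, of cs] cw(1) by simp
  have "last M = 2"
  proof -
    have "L - 2 < walk_len w" using wl L3 by simp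
    moreover have "Suc (L - 2) = L - 1" using L3 by simp
    then have "w ! Suc (L - 2) = 1" using wp(1,3) L_def by (simp add: last_conv_nth)
    ultimately have "w ! (L - 2) = 2" using nb2 by blast
    moreover have "last M = M ! (L - 3)" using Mne lM by (simp add: last_conv_nth numeral_3_eq_3)
    moreover have "M ! (L - 3) = w ! (L - 2)" using Mk[of "L - 3"] L3 by (simp add: Suc_diff_Suc numeral_3_eq_3 numeral_2_eq_2)
    ultimately show ?thesis by simp
  qed
  then have lW: "last W = 1" using last_ex[OF Wne, of cs] cw(1) by simp
  have g: "good cs W" using Wne hW lW cw unfolding good_def by simp
  have wP: "w = Psi cs W" using wM cw(1) by (simp add: Psi_def)
  have sc: "sum_list cs = f - 1" using good_root[OF g] wP wp(8) by simp
  have "W \<in> Lam u (vcount w)"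
  proof (rule LamI)
    show "W \<noteq> []" "hd W = 1" "last W = 1" "0 \<notin> set W" using Wne hW lW cw(3) by auto
    show "minimal_walk W" using minimal_Psi_rev[of cs W] wp(5) wP Wne cw(3) by simp
    show "is_tree (set W) (walk_edges W)" using tree_Psi[OF g] wp(6) wP by simp
    show "walk_len W = 2 * u" using good_len[OF g] wP wp(7) sc f by simp
    show "root_steps W = vcount w" using good_vcount[OF g] wP by simp
  qed
  moreover have "cs \<in> CS (vcount w) f"
    using cw(2) root_count[OF Wne lW] good_vcount[OF g] wP sc unfolding CS_def by simp
  ultimately show ?thesis using wP by blast
qed



lemma root_le:
  assumes W: "W \<in> Lam u v" shows "v \<le> u"
proof -
  have Wp: "W \<noteq> []" "last W = 1" "is_tree (set W) (walk_edges W)" "walk_len W = 2 * u" "root_steps W = v"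
    using Lam_props[OF W] by auto
  have lf: "loopfree (walk_edges W)" using tree_iff_count Wp(1,3) by blast
  define A where "A = {i. i < walk_len W \<and> W ! i = 1}"
  have cA: "card A = v" using Wp(5) unfolding root_steps_def A_def by simp
  have sub: "Suc ` A \<subseteq> {i. i < walk_len W \<and> W ! i \<noteq> 1}"
  proof
    fix j assume "j \<in> Suc ` A"
    then obtain i where i: "j = Suc i" "i < walk_len W" "W ! i = 1" unfolding A_def by blast
    have ne: "W ! Suc i \<noteq> 1"
    proof
      assume "W ! Suc i = 1"
      then have "{1} \<in> walk_edges W" using step_edge[OF i(2)] i(3) by simp
      then show False using lf unfolding loopfree_def by fastforce
    qed
    have "Suc i < walk_len W"
    proof (rule ccontr)
      assume "\<not> Suc i < walk_len W"
      then have "Suc i = length W - 1" using i(2) unfolding walk_len_def by simp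
      then have "W ! Suc i = 1" using Wp(1,2) by (simp add: last_conv_nth)
      then show False using ne by simp
    qed
    then show "j \<in> {i. i < walk_len W \<and> W ! i \<noteq> 1}" using i(1) ne by simp
  qed
  have disj: "A \<inter> Suc ` A = {}" using sub unfolding A_def by blast
  have "A \<union> Suc ` A \<subseteq> {..<walk_len W}" using sub unfolding A_def by auto
  then have "card (A \<union> Suc ` A) \<le> walk_len W" by (metis card_lessThan card_mono finite_lessThan)
  moreover have "card (A \<union> Suc ` A) = card A + card (Suc ` A)"
    using disj by (intro card_Un_disjoint) (auto simp: A_def)
  moreover have "card (Suc ` A) = card A" by (simp add: card_image)
  ultimately show ?thesis using cA Wp(4) by simp
qed

lemma finite_Lam: "finite (Lam l r)"
proof -
  have "Lam l r \<subseteq> {w. set w \<subseteq> {0..2 * l + 1} \<and> length w = 2 * l + 1}"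
  proof
    fix w assume w: "w \<in> Lam l r"
    have wp: "w \<noteq> []" "minimal_walk w" "walk_len w = 2 * l" using Lam_props[OF w] by auto
    then have lw: "length w = 2 * l + 1" unfolding walk_len_def by (cases w) auto
    obtain n where n: "set (take (length w) w) = {1..n}" using minimal_seg[OF wp(2), of "length w"] by auto
    then have sw: "set w = {1..n}" by simp
    have "n = card (set w)" using sw by simp
    also have "\<dots> \<le> length w" by (rule card_length)
    finally have "set w \<subseteq> {0..2 * l + 1}" using sw lw by auto
    then show "w \<in> {w. set w \<subseteq> {0..2 * l + 1} \<and> length w = 2 * l + 1}" using lw by simp
  qed
  moreover have "finite {w. set w \<subseteq> {0..2 * l + 1} \<and> length w = (2 * l + 1 :: nat)}"
    by (rule finite_lists_length_eq) simp
  ultimately show ?thesis by (rule finite_subset)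
qed

lemma finite_Lam2: "finite (Lam2 l r)"
  using finite_Lam[of l r] unfolding Lam2_def by simp

lemma part1:
  assumes f: "1 \<le> f"
  shows "S2 \<theta> (f + u) f = (\<Sum>v=0..u. S3 \<theta> (f + u) f v)"
proof -
  have "vcount ` Lam2 (f + u) f \<subseteq> {0..u}"
  proof
    fix v assume "v \<in> vcount ` Lam2 (f + u) f"
    then obtain w where w: "w \<in> Lam2 (f + u) f" "v = vcount w" by blast
    then obtain cs W where "W \<in> Lam u (vcount w)" using decomposition[OF f] by blast
    then show "v \<in> {0..u}" using root_le w(2) by simp
  qed
  then have "(\<Sum>v=0..u. sum \<theta> {w. w \<in> Lam2 (f + u) f \<and> vcount w = v}) = sum \<theta> (Lam2 (f + u) f)"
    by (intro sum.group finite_Lam2) simp_all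
  then show ?thesis unfolding S2_def S3_def Lam3_def by simp
qed

lemma bij_Psi:
  assumes f: "1 \<le> f"
  shows "bij_betw (\<lambda>(cs, W). Psi cs W) (CS v f \<times> Lam u v) (Lam3 (f + u) f v)"
  unfolding bij_betw_def
proof (intro conjI)
  show "inj_on (\<lambda>(cs, W). Psi cs W) (CS v f \<times> Lam u v)"
  proof (rule inj_onI, clarify)
    fix cs W cs' W'
    assume a: "cs \<in> CS v f" "W \<in> Lam u v" "cs' \<in> CS v f" "W' \<in> Lam u v" "Psi cs W = Psi cs' W'"
    have g: "good cs W" "good cs' W'"
      using Lam_props[OF a(2)] Lam_props[OF a(4)] a(1,3) root_count[of W] root_count[of W']
      unfolding good_def CS_def by auto
    have "ex cs W = ex cs' W'" using a(5) unfolding Psi_def by simp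
    then show "cs = cs' \<and> W = W'" using ex_inj g unfolding good_def by blast
  qed
  show "(\<lambda>(cs, W). Psi cs W) ` (CS v f \<times> Lam u v) = Lam3 (f + u) f v"
  proof (intro set_eqI iffI)
    fix w assume "w \<in> (\<lambda>(cs, W). Psi cs W) ` (CS v f \<times> Lam u v)"
    then show "w \<in> Lam3 (f + u) f v" using Psi_Lam3[OF f] by auto
  next
    fix w assume w: "w \<in> Lam3 (f + u) f v"
    then have w2: "w \<in> Lam2 (f + u) f" "vcount w = v" unfolding Lam3_def by auto
    then obtain cs W where "w = Psi cs W" "cs \<in> CS v f" "W \<in> Lam u v" using decomposition[OF f w2(1)] by auto
    then show "w \<in> (\<lambda>(cs, W). Psi cs W) ` (CS v f \<times> Lam u v)" by force
  qed
qed

lemma card_CS: "1 \<le> f \<Longrightarrow> card (CS v f) = (f + v - 1) choose (f - 1)"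
proof -
  assume f: "1 \<le> f"
  have "card (CS v f) = (f - 1 + (v + 1) - 1) choose (f - 1)"
    unfolding CS_def using card_length_sum_list[of "v + 1" "f - 1"] by simp
  also have "f - 1 + (v + 1) - 1 = f + v - 1" using f by simp
  finally show ?thesis .
qed

lemma part2:
  assumes f: "1 \<le> f"
    and th: "\<And>cs W. cs \<in> CS v f \<Longrightarrow> W \<in> Lam u v \<Longrightarrow> \<theta> (Psi cs W) = c * \<eta> W"
  shows "S3 \<theta> (f + u) f v = c * real ((f + v - 1) choose (f - 1)) * S \<eta> u v"
proof -
  have "S3 \<theta> (f + u) f v = (\<Sum>x\<in>CS v f \<times> Lam u v. \<theta> ((\<lambda>(cs, W). Psi cs W) x))"
    unfolding S3_def using sum.reindex_bij_betw[OF bij_Psi[OF f], of \<theta>] by simp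
  also have "\<dots> = (\<Sum>(cs, W)\<in>CS v f \<times> Lam u v. c * \<eta> W)"
    by (intro sum.cong refl) (auto simp: th)
  also have "\<dots> = (\<Sum>cs\<in>CS v f. \<Sum>W\<in>Lam u v. c * \<eta> W)"
    by (rule sum.cartesian_product[symmetric])
  also have "\<dots> = real (card (CS v f)) * (c * S \<eta> u v)"
    by (simp add: S_def sum_distrib_left)
  finally show ?thesis using card_CS[OF f] by simp
qed

theorem lemma2:
  fixes \<alpha> p :: real and X :: "nat \<Rightarrow> real" and f u :: nat
  assumes "0 < \<alpha>" "\<alpha> < 1" "0 < p" "1 \<le> f"
  shows "S2 (theta1 \<alpha> p X) (f + u) f = (\<Sum>v=0..u. S3 (theta1 \<alpha> p X) (f + u) f v) \<and>
         S2 (theta2 \<alpha> p X) (f + u) f = (\<Sum>v=0..u. S3 (theta2 \<alpha> p X) (f + u) f v) \<and>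
         (\<forall>v\<le>u. S3 (theta1 \<alpha> p X) (f + u) f v
           = \<alpha> * real ((f + v - 1) choose (f - 1)) * (p * X (2 * f)) * S (theta2 \<alpha> p X) u v) \<and>
         (\<forall>v\<le>u. S3 (theta2 \<alpha> p X) (f + u) f v
           = (1 - \<alpha>) * real ((f + v - 1) choose (f - 1)) * (p * X (2 * f)) * S (theta1 \<alpha> p X) u v)"
proof -
  have f: "1 \<le> f" by fact
  have gW: "good cs W \<and> is_tree (set W) (walk_edges W) \<and> 2 + 2 * sum_list cs = 2 * f"
    if "cs \<in> CS v f" "W \<in> Lam u v" for cs W v
    using Lam_props[OF that(2)] that(1) root_count[of W] f unfolding good_def CS_def by auto
  have t1: "S3 (theta1 \<alpha> p X) (f + u) f v
           = \<alpha> * real ((f + v - 1) choose (f - 1)) * (p * X (2 * f)) * S (theta2 \<alpha> p X) u v" for v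
  proof -
    have "S3 (theta1 \<alpha> p X) (f + u) f v = (\<alpha> * (p * X (2 * f))) * real ((f + v - 1) choose (f - 1)) * S (theta2 \<alpha> p X) u v"
      using gW theta_Psi(1) by (intro part2[OF f]) metis
    then show ?thesis by (simp add: algebra_simps)
  qed
  have t2: "S3 (theta2 \<alpha> p X) (f + u) f v
           = (1 - \<alpha>) * real ((f + v - 1) choose (f - 1)) * (p * X (2 * f)) * S (theta1 \<alpha> p X) u v" for v
  proof -
    have "S3 (theta2 \<alpha> p X) (f + u) f v = ((1 - \<alpha>) * (p * X (2 * f))) * real ((f + v - 1) choose (f - 1)) * S (theta1 \<alpha> p X) u v"
      using gW theta_Psi(2) by (intro part2[OF f]) metis
    then show ?thesis by (simp add: algebra_simps)
  qed
  show ?thesis using part1[OF f] t1 t2 by blast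
qed


end
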